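(* Fix $k\in\mathbb N$ and $a_1,\dots,a_k>0$. Then, as $N\to\infty$, $$N^{2/k}\Big[\min_{j=1}^N\Big(\sum_{i=1}^k a_i(\sqrt N\gamma_{ij})^2\Big)-\min_{j=1}^N\Big(\sum_{i=1}^k a_iy_{ij}^2\Big)\Big]\to0\quad\text{in probability}.$$
   Context: Let $\mathbf{y}_1,\dots,\mathbf{y}_N$ be i.i.d. $\mathcal N(0,\mathrm{Id}_N)$ vectors in $\mathbb R^N$, $y_{ij}$ the $j$-th entry of $\mathbf y_i$. Gram–Schmidt: $\mathbf w_1=\mathbf y_1$, $\mathbf w_i=\mathbf y_i-\sum_{j<i}\frac{\langle\mathbf y_i,\mathbf w_j\rangle}{\|\mathbf w_j\|^2}\mathbf w_j$, $\boldsymbol\gamma_i=\mathbf w_i/\|\mathbf w_i\|$, with $\gamma_{ij}$ the $j$-th entry of $\boldsymbol\gamma_i$. *)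

theory Defs
  imports "HOL-Probability.Probability"
begin

text \<open>Vectors in R^N are functions nat => real, entries indexed by 1..N.\<close>

definition ipN :: "nat \<Rightarrow> (nat \<Rightarrow> real) \<Rightarrow> (nat \<Rightarrow> real) \<Rightarrow> real" where
  "ipN N u v = (\<Sum>l=1..N. u l * v l)"

primrec gs_ws :: "nat \<Rightarrow> (nat \<Rightarrow> nat \<Rightarrow> real) \<Rightarrow> nat \<Rightarrow> (nat \<Rightarrow> real) list" where
  "gs_ws N y 0 = []"
| "gs_ws N y (Suc n) =
     (let ws = gs_ws N y n
      in ws @ [(\<lambda>l. y (Suc n) l - (\<Sum>w\<leftarrow>ws. ipN N (y (Suc n)) w / ipN N w w * w l))])"

definition gs_w :: "nat \<Rightarrow> (nat \<Rightarrow> nat \<Rightarrow> real) \<Rightarrow> nat \<Rightarrow> nat \<Rightarrow> real" where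
  "gs_w N y i = gs_ws N y i ! (i - 1)"

definition gs_gamma :: "nat \<Rightarrow> (nat \<Rightarrow> nat \<Rightarrow> real) \<Rightarrow> nat \<Rightarrow> nat \<Rightarrow> real" where
  "gs_gamma N y i j = gs_w N y i j / sqrt (ipN N (gs_w N y i) (gs_w N y i))"

text \<open>Probability space for N i.i.d. N(0, Id_N) vectors: entries omega (i,j) = y_{ij},
  1 <= i,j <= N, i.i.d. standard Gaussians.\<close>
definition gauss_space :: "nat \<Rightarrow> (nat \<times> nat \<Rightarrow> real) measure" where
  "gauss_space N = PiM ({1..N} \<times> {1..N}) (\<lambda>_. density lborel std_normal_density)"

definition yvecs :: "(nat \<times> nat \<Rightarrow> real) \<Rightarrow> nat \<Rightarrow> nat \<Rightarrow> real" where
  "yvecs \<omega> i j = \<omega> (i, j)"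

definition lemma3p10_stat :: "nat \<Rightarrow> (nat \<Rightarrow> real) \<Rightarrow> nat \<Rightarrow> (nat \<times> nat \<Rightarrow> real) \<Rightarrow> real" where
  "lemma3p10_stat k a N \<omega> =
     real N powr (2 / real k) *
       (Min ((\<lambda>j. \<Sum>i=1..k. a i * (sqrt (real N) * gs_gamma N (yvecs \<omega>) i j)^2) ` {1..N})
      - Min ((\<lambda>j. \<Sum>i=1..k. a i * (yvecs \<omega> i j)^2) ` {1..N}))"

end

theory Submission
  imports Defs
begin


abbreviation "G \<equiv> density lborel std_normal_density"

lemma G_prob: "prob_space G"
  by (rule prob_space_normal_density) simp

lemma G_moment_even: "has_bochner_integral G (\<lambda>x. x^(2*m)) (fact (2 * m) / (2^m * fact m))"
  by (rule has_bochner_integral_density) (auto intro: std_normal_moment_even)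

lemma G_moment_odd: "has_bochner_integral G (\<lambda>x. x^(2*m+1)) 0"
proof -
  have "has_bochner_integral lborel (\<lambda>x. std_normal_density x *\<^sub>R x^(2*m+1)) 0"
    using std_normal_moment_odd[of m] by simp
  then show ?thesis by (rule has_bochner_integral_density[rotated 3]) auto
qed

lemma G_x: "has_bochner_integral G (\<lambda>x. x) 0"
  using G_moment_odd[of 0] by simp
lemma G_x2: "has_bochner_integral G (\<lambda>x. x^2) 1"
  using G_moment_even[of 1] by simp
lemma G_x4: "has_bochner_integral G (\<lambda>x. x^4) 3"
  using G_moment_even[of 2] by (simp add: fact_numeral)

interpretation GP: product_sigma_finite "\<lambda>_::nat\<times>nat. G"
  by (simp add: product_sigma_finite_def G_prob prob_space_imp_sigma_finite)

lemma gen_prod: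
  fixes f :: "nat\<times>nat \<Rightarrow> real \<Rightarrow> real"
  assumes "finite I" "J \<subseteq> I" "\<And>c. c \<in> J \<Longrightarrow> integrable G (f c)"
  shows "integrable (PiM I (\<lambda>_. G)) (\<lambda>\<omega>. \<Prod>c\<in>J. f c (\<omega> c))"
    and "(\<integral>\<omega>. (\<Prod>c\<in>J. f c (\<omega> c)) \<partial>PiM I (\<lambda>_. G)) = (\<Prod>c\<in>J. integral\<^sup>L G (f c))"
proof -
  define g where "g c = (if c \<in> J then f c else (\<lambda>_. 1))" for c
  have fJ: "finite J" using assms finite_subset by blast
  have eq: "(\<Prod>c\<in>I. g c (\<omega> c)) = (\<Prod>c\<in>J. f c (\<omega> c))" for \<omega>
  proof -
    have "(\<Prod>c\<in>I. g c (\<omega> c)) = (\<Prod>c\<in>J. g c (\<omega> c))"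
      by (rule prod.mono_neutral_right) (use assms in \<open>auto simp: g_def\<close>)
    also have "\<dots> = (\<Prod>c\<in>J. f c (\<omega> c))" by (rule prod.cong) (auto simp: g_def)
    finally show ?thesis .
  qed
  have eq2: "(\<Prod>c\<in>I. integral\<^sup>L G (g c)) = (\<Prod>c\<in>J. integral\<^sup>L G (f c))"
  proof -
    interpret prob_space G by (rule G_prob)
    have "(\<Prod>c\<in>I. integral\<^sup>L G (g c)) = (\<Prod>c\<in>J. integral\<^sup>L G (g c))"
      by (rule prod.mono_neutral_right) (use assms prob_space in \<open>auto simp: g_def\<close>)
    also have "\<dots> = (\<Prod>c\<in>J. integral\<^sup>L G (f c))" by (rule prod.cong) (auto simp: g_def)
    finally show ?thesis .
  qed
  have ig: "c \<in> I \<Longrightarrow> integrable G (g c)" for c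
  proof -
    interpret prob_space G by (rule G_prob)
    show "c \<in> I \<Longrightarrow> integrable G (g c)" using assms(3) by (auto simp: g_def)
  qed
  show "integrable (PiM I (\<lambda>_. G)) (\<lambda>\<omega>. \<Prod>c\<in>J. f c (\<omega> c))"
    using GP.product_integrable_prod[of I g, OF assms(1) ig] unfolding eq by simp
  show "(\<integral>\<omega>. (\<Prod>c\<in>J. f c (\<omega> c)) \<partial>PiM I (\<lambda>_. G)) = (\<Prod>c\<in>J. integral\<^sup>L G (f c))"
    using GP.product_integral_prod[of I g, OF assms(1) ig] unfolding eq eq2 by simp
qed

lemma (in prob_space) cheb_sum:
  fixes Z :: "'j \<Rightarrow> 'a \<Rightarrow> real" and v :: real
  assumes "finite J"
    and int: "\<And>j j'. j\<in>J \<Longrightarrow> j'\<in>J \<Longrightarrow> integrable M (\<lambda>\<omega>. Z j \<omega> * Z j' \<omega>)"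
    and meas: "\<And>j. j\<in>J \<Longrightarrow> Z j \<in> borel_measurable M"
    and orth: "\<And>j j'. j\<in>J \<Longrightarrow> j'\<in>J \<Longrightarrow> j\<noteq>j' \<Longrightarrow> expectation (\<lambda>\<omega>. Z j \<omega> * Z j' \<omega>) = 0"
    and var: "\<And>j. j\<in>J \<Longrightarrow> expectation (\<lambda>\<omega>. Z j \<omega> * Z j \<omega>) \<le> v"
    and "t > 0"
  shows "measure M {\<omega>\<in>space M. \<bar>\<Sum>j\<in>J. Z j \<omega>\<bar> \<ge> t} \<le> card J * v / t\<^sup>2"
    and "{\<omega>\<in>space M. \<bar>\<Sum>j\<in>J. Z j \<omega>\<bar> \<ge> t} \<in> sets M"
proof -
  have sq: "(\<Sum>j\<in>J. Z j \<omega>)^2 = (\<Sum>j\<in>J. \<Sum>j'\<in>J. Z j \<omega> * Z j' \<omega>)" for \<omega>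
    by (simp add: power2_eq_square sum_product)
  have m: "(\<lambda>\<omega>. \<Sum>j\<in>J. Z j \<omega>) \<in> borel_measurable M"
    using meas by (intro borel_measurable_sum) auto
  have i: "integrable M (\<lambda>\<omega>. (\<Sum>j\<in>J. Z j \<omega>)^2)"
    unfolding sq using int by (intro Bochner_Integration.integrable_sum) auto
  have "expectation (\<lambda>\<omega>. (\<Sum>j\<in>J. Z j \<omega>)^2) = (\<Sum>j\<in>J. \<Sum>j'\<in>J. expectation (\<lambda>\<omega>. Z j \<omega> * Z j' \<omega>))"
    unfolding sq using int by (simp add: Bochner_Integration.integral_sum integrable_sum)
  also have "\<dots> = (\<Sum>j\<in>J. expectation (\<lambda>\<omega>. Z j \<omega> * Z j \<omega>))"
  proof (rule sum.cong[OF refl])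
    fix j assume j: "j \<in> J"
    show "(\<Sum>j'\<in>J. expectation (\<lambda>\<omega>. Z j \<omega> * Z j' \<omega>)) = expectation (\<lambda>\<omega>. Z j \<omega> * Z j \<omega>)"
      using j orth \<open>finite J\<close> by (subst sum.remove[of _ j]) (auto intro!: sum.neutral)
  qed
  also have "\<dots> \<le> (\<Sum>j\<in>J. v)" using var by (intro sum_mono) auto
  also have "\<dots> = card J * v" by simp
  finally have e: "expectation (\<lambda>\<omega>. (\<Sum>j\<in>J. Z j \<omega>)^2) \<le> card J * v" .
  have "measure M {\<omega>\<in>space M. \<bar>\<Sum>j\<in>J. Z j \<omega>\<bar> \<ge> t} \<le> expectation (\<lambda>\<omega>. (\<Sum>j\<in>J. Z j \<omega>)^2) / t\<^sup>2"
    by (rule second_moment_method[OF m i]) (use \<open>t>0\<close> in auto)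
  also have "\<dots> \<le> card J * v / t\<^sup>2" using e \<open>t>0\<close> by (simp add: divide_right_mono)
  finally show "measure M {\<omega>\<in>space M. \<bar>\<Sum>j\<in>J. Z j \<omega>\<bar> \<ge> t} \<le> card J * v / t\<^sup>2" .
  show "{\<omega>\<in>space M. \<bar>\<Sum>j\<in>J. Z j \<omega>\<bar> \<ge> t} \<in> sets M"
    using m by measurable
qed



lemma gs_ws_map: "gs_ws N y n = map (gs_w N y) [1..<Suc n]"
proof (induction n)
  case 0 then show ?case by simp
next
  case (Suc n)
  have len: "length (gs_ws N y n) = n" using Suc by simp
  have "gs_w N y (Suc n) = (gs_ws N y (Suc n)) ! n" by (simp add: gs_w_def)
  also have "\<dots> = (\<lambda>l. y (Suc n) l - (\<Sum>w\<leftarrow>gs_ws N y n. ipN N (y (Suc n)) w / ipN N w w * w l))"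
    using len by (simp add: Let_def nth_append)
  finally have e: "gs_w N y (Suc n) = (\<lambda>l. y (Suc n) l - (\<Sum>w\<leftarrow>gs_ws N y n. ipN N (y (Suc n)) w / ipN N w w * w l))" .
  show ?case using Suc e by (simp add: Let_def)
qed

lemma gs_w_rec: "gs_w N y (Suc n) l = y (Suc n) l -
   (\<Sum>m=1..n. ipN N (y (Suc n)) (gs_w N y m) / ipN N (gs_w N y m) (gs_w N y m) * gs_w N y m l)"
proof -
  have len: "length (gs_ws N y n) = n" by (simp add: gs_ws_map)
  have "gs_w N y (Suc n) = (gs_ws N y (Suc n)) ! n" by (simp add: gs_w_def)
  also have "\<dots> = (\<lambda>l. y (Suc n) l - (\<Sum>w\<leftarrow>gs_ws N y n. ipN N (y (Suc n)) w / ipN N w w * w l))"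
    using len by (simp add: Let_def nth_append)
  finally have e: "gs_w N y (Suc n) l = y (Suc n) l - (\<Sum>w\<leftarrow>gs_ws N y n. ipN N (y (Suc n)) w / ipN N w w * w l)"
    by simp
  have "(\<Sum>w\<leftarrow>gs_ws N y n. ipN N (y (Suc n)) w / ipN N w w * w l)
      = (\<Sum>m\<leftarrow>[1..<Suc n]. ipN N (y (Suc n)) (gs_w N y m) / ipN N (gs_w N y m) (gs_w N y m) * gs_w N y m l)"
    by (simp add: gs_ws_map o_def)
  also have "\<dots> = (\<Sum>m=1..<Suc n. ipN N (y (Suc n)) (gs_w N y m) / ipN N (gs_w N y m) (gs_w N y m) * gs_w N y m l)"
    by (simp only: interv_sum_list_conv_sum_set_nat set_upt)
  also have "{1..<Suc n} = {1..n}" by auto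
  finally show ?thesis using e by simp
qed

definition gcond :: "nat \<Rightarrow> real \<Rightarrow> nat \<Rightarrow> (nat \<Rightarrow> nat \<Rightarrow> real) \<Rightarrow> bool" where
  "gcond k \<eta> N y \<longleftrightarrow> (\<forall>i\<in>{1..k}. \<forall>l\<in>{1..k}.
      \<bar>ipN N (y i) (y l) - (if i = l then real N else 0)\<bar> \<le> \<eta> * N)"

definition Hc :: "nat \<Rightarrow> real \<Rightarrow> nat \<Rightarrow> (nat \<Rightarrow> nat \<Rightarrow> real) \<Rightarrow> bool" where
  "Hc n \<delta> N y \<longleftrightarrow> (\<forall>m\<in>{1..n}. \<forall>j. \<bar>gs_w N y m j - y m j\<bar> \<le> \<delta> * (\<Sum>p\<in>{1..<m}. \<bar>y p j\<bar>))"

lemma gcond_mono: "gcond k \<eta> N y \<Longrightarrow> \<eta> \<le> \<eta>' \<Longrightarrow> gcond k \<eta>' N y"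
  unfolding gcond_def by (meson mult_right_mono of_nat_0_le_iff order_trans)

lemma ip_diag_le: assumes "gcond k \<eta> N y" "p \<in> {1..k}" shows "ipN N (y p) (y p) \<le> (1+\<eta>) * N"
  using assms unfolding gcond_def by (force simp: algebra_simps abs_le_iff)

lemma ip_diag_ge: assumes "gcond k \<eta> N y" "p \<in> {1..k}" shows "ipN N (y p) (y p) \<ge> (1-\<eta>) * N"
  using assms unfolding gcond_def by (force simp: algebra_simps abs_le_iff)

lemma ip_off: assumes "gcond k \<eta> N y" "p \<in> {1..k}" "r \<in> {1..k}" "p \<noteq> r"
  shows "\<bar>ipN N (y p) (y r)\<bar> \<le> \<eta> * N"
  using assms unfolding gcond_def by force

lemma amgm: assumes "gcond k \<eta> N y" "\<eta> \<le> 1" "p \<in> {1..k}" "r \<in> {1..k}"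
  shows "(\<Sum>j=1..N. \<bar>y p j\<bar> * \<bar>y r j\<bar>) \<le> 2 * N"
proof -
  have "(\<Sum>j=1..N. \<bar>y p j\<bar> * \<bar>y r j\<bar>) \<le> (\<Sum>j=1..N. (y p j * y p j + y r j * y r j) / 2)"
  proof (rule sum_mono)
    fix j
    have "0 \<le> (\<bar>y p j\<bar> - \<bar>y r j\<bar>)^2" by simp
    then show "\<bar>y p j\<bar> * \<bar>y r j\<bar> \<le> (y p j * y p j + y r j * y r j) / 2"
      by (simp add: power2_eq_square algebra_simps abs_mult_self_eq)
  qed
  also have "\<dots> = (ipN N (y p) (y p) + ipN N (y r) (y r)) / 2"
    unfolding ipN_def by (simp only: sum.distrib[symmetric] sum_divide_distrib)
  also have "\<dots> \<le> ((1+\<eta>) * N + (1+\<eta>) * N) / 2"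
    using ip_diag_le[OF assms(1,3)] ip_diag_le[OF assms(1,4)] by (simp add: algebra_simps)
  also have "\<dots> \<le> 2 * N" using mult_right_mono[of "1+\<eta>" 2 "real N"] assms(2) by (simp add: mult.commute[of "real N"])
  finally show ?thesis .
qed

lemma ip_sq_ge: "ipN N w w \<ge> 2 * ipN N u w - ipN N u u"
proof -
  have "0 \<le> (\<Sum>j=1..N. (w j - u j)^2)" by (intro sum_nonneg) auto
  also have "\<dots> = ipN N w w - 2 * ipN N u w + ipN N u u"
    by (simp add: ipN_def power2_eq_square algebra_simps sum.distrib sum_subtractf sum_distrib_left)
  finally show ?thesis by simp
qed

lemma ip_diff_bound:
  assumes g: "gcond k \<eta> N y" and "\<eta> \<le> 1" and p: "p \<in> {1..k}" and m: "m \<in> {1..k}" and "\<delta> \<ge> 0"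
    and w: "\<And>j. \<bar>w j - y m j\<bar> \<le> \<delta> * (\<Sum>r\<in>{1..<m}. \<bar>y r j\<bar>)"
  shows "\<bar>ipN N (y p) w - ipN N (y p) (y m)\<bar> \<le> \<delta> * (2 * k) * N"
proof -
  have "ipN N (y p) w - ipN N (y p) (y m) = (\<Sum>j=1..N. y p j * (w j - y m j))"
    by (simp add: ipN_def sum_subtractf right_diff_distrib)
  also have "\<bar>\<dots>\<bar> \<le> (\<Sum>j=1..N. \<bar>y p j * (w j - y m j)\<bar>)" by (rule sum_abs)
  also have "\<dots> \<le> (\<Sum>j=1..N. \<bar>y p j\<bar> * (\<delta> * (\<Sum>r\<in>{1..<m}. \<bar>y r j\<bar>)))"
  proof (rule sum_mono)
    fix j show "\<bar>y p j * (w j - y m j)\<bar> \<le> \<bar>y p j\<bar> * (\<delta> * (\<Sum>r\<in>{1..<m}. \<bar>y r j\<bar>))"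
      unfolding abs_mult by (rule mult_left_mono[OF w]) simp
  qed
  also have "\<dots> = (\<Sum>j=1..N. \<Sum>r\<in>{1..<m}. \<delta> * (\<bar>y p j\<bar> * \<bar>y r j\<bar>))"
    by (simp add: sum_distrib_left mult.assoc mult.left_commute)
  also have "\<dots> = (\<Sum>r\<in>{1..<m}. \<Sum>j=1..N. \<delta> * (\<bar>y p j\<bar> * \<bar>y r j\<bar>))"
    by (rule sum.swap)
  also have "\<dots> = \<delta> * (\<Sum>r\<in>{1..<m}. \<Sum>j=1..N. \<bar>y p j\<bar> * \<bar>y r j\<bar>)"
    by (simp add: sum_distrib_left)
  also have "\<dots> \<le> \<delta> * (\<Sum>r\<in>{1..<m}. 2 * real N)"
  proof (rule mult_left_mono[OF sum_mono])
    fix r assume "r \<in> {1..<m}"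
    then show "(\<Sum>j=1..N. \<bar>y p j\<bar> * \<bar>y r j\<bar>) \<le> 2 * real N"
      using m amgm[OF g \<open>\<eta> \<le> 1\<close> p, of r] by auto
  qed (simp add: \<open>\<delta> \<ge> 0\<close>)
  also have "\<dots> \<le> \<delta> * (2 * k) * N"
  proof -
    have "real (m - 1) \<le> real k" using m by auto
    then have "(m - 1) * (2 * real N) \<le> k * (2 * real N)" by (intro mult_right_mono) auto
    then show ?thesis using \<open>\<delta> \<ge> 0\<close> by (simp add: mult_left_mono algebra_simps)
  qed
  finally show ?thesis .
qed

lemma w_abs_bound:
  fixes w \<delta> :: real and u :: "nat \<Rightarrow> real"
  assumes "\<bar>w - u m\<bar> \<le> \<delta> * (\<Sum>r\<in>{1..<m}. \<bar>u r\<bar>)" "0 \<le> \<delta>" "\<delta> \<le> 1" "1 \<le> m" "m \<le> n"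
  shows "\<bar>w\<bar> \<le> (\<Sum>r\<in>{1..n}. \<bar>u r\<bar>)"
proof -
  have "\<delta> * (\<Sum>r\<in>{1..<m}. \<bar>u r\<bar>) \<le> (\<Sum>r\<in>{1..<m}. \<bar>u r\<bar>)"
  proof -
    have "0 \<le> (\<Sum>r\<in>{1..<m}. \<bar>u r\<bar>)" by (rule sum_nonneg) simp
    then show ?thesis using mult_left_le_one_le assms(2,3) by blast
  qed
  then have "\<bar>w\<bar> \<le> \<bar>u m\<bar> + (\<Sum>r\<in>{1..<m}. \<bar>u r\<bar>)" using assms(1) by linarith
  also have "\<dots> = (\<Sum>r\<in>{1..m}. \<bar>u r\<bar>)"
  proof -
    have "{1..m} = insert m {1..<m}" using assms by auto
    then show ?thesis by simp
  qed
  also have "\<dots> \<le> (\<Sum>r\<in>{1..n}. \<bar>u r\<bar>)" using assms by (intro sum_mono2) auto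
  finally show ?thesis .
qed



lemma DL: "n \<le> k \<Longrightarrow> \<forall>\<delta>>0. \<exists>\<eta>>0. \<forall>N y. N \<ge> 1 \<longrightarrow> gcond k \<eta> N y \<longrightarrow> Hc n \<delta> N y"
proof (induction n)
  case 0
  show ?case by (auto simp: Hc_def intro: exI[of _ 1])
next
  case (Suc n)
  have nk: "n \<le> k" "Suc n \<le> k" using Suc.prems by auto
  have k1: "real k \<ge> 1" using nk by simp
  show ?case
  proof (intro allI impI)
    fix \<delta> :: real assume "\<delta> > 0"
    define \<delta>' where "\<delta>' = min \<delta> (min (1/(16*real k)) (\<delta>/(8*real k^2)))"
    have d'pos: "\<delta>' > 0" using \<open>\<delta>>0\<close> k1 by (simp add: \<delta>'_def)
    have d'1: "\<delta>' \<le> \<delta>" "\<delta>' \<le> 1/(16*real k)" "\<delta>' \<le> \<delta>/(8*real k^2)" by (simp_all add: \<delta>'_def)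
    have d'le1: "\<delta>' \<le> 1"
    proof -
      have "1/(16*real k) \<le> 1" using k1 by simp
      then show ?thesis using d'1(2) by linarith
    qed
    have d'k: "real k * \<delta>' \<le> 1/16" using d'1(2) k1 by (simp add: field_simps)
    have d'k2: "real k * real k * \<delta>' \<le> \<delta>/8" using d'1(3) k1 by (simp add: field_simps power2_eq_square)
    obtain \<eta>' where "\<eta>' > 0" and IH: "\<forall>N y. N \<ge> 1 \<longrightarrow> gcond k \<eta>' N y \<longrightarrow> Hc n \<delta>' N y"
      using Suc.IH[OF nk(1)] d'pos by blast
    define \<eta> where "\<eta> = min \<eta>' (min (1/4) (\<delta>/(4*real k)))"
    have etapos: "\<eta> > 0" using \<open>\<eta>'>0\<close> \<open>\<delta>>0\<close> k1 by (simp add: \<eta>_def)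
    have eta1: "\<eta> \<le> \<eta>'" "\<eta> \<le> 1/4" "\<eta> \<le> \<delta>/(4*real k)" by (simp_all add: \<eta>_def)
    have etak: "real k * \<eta> \<le> \<delta>/4" using eta1(3) k1 by (simp add: field_simps)
    show "\<exists>\<eta>>0. \<forall>N y. N \<ge> 1 \<longrightarrow> gcond k \<eta> N y \<longrightarrow> Hc (Suc n) \<delta> N y"
    proof (intro exI[of _ \<eta>] conjI allI impI etapos)
      fix N :: nat and y assume N1: "N \<ge> 1" and g: "gcond k \<eta> N y"
      have Npos: "real N > 0" using N1 by simp
      have g': "gcond k \<eta>' N y" using gcond_mono[OF g eta1(1)] .
      have Hn: "Hc n \<delta>' N y" using IH N1 g' by blast
      have e1: "\<eta> \<le> 1" using eta1(2) by simp
      have hw: "\<bar>gs_w N y m j - y m j\<bar> \<le> \<delta>' * (\<Sum>r\<in>{1..<m}. \<bar>y r j\<bar>)" if "m \<in> {1..n}" for m j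
        using Hn that unfolding Hc_def by blast
      have ab: "\<bar>ipN N (y p) (gs_w N y m) - ipN N (y p) (y m)\<bar> \<le> \<delta>' * (2 * k) * N"
        if "m \<in> {1..n}" "p \<in> {1..k}" for m p
        using that nk by (intro ip_diff_bound[OF g e1 that(2)] hw) (auto simp: less_imp_le d'pos)
      have Wge: "ipN N (gs_w N y m) (gs_w N y m) \<ge> N / 2" if m: "m \<in> {1..n}" for m
      proof -
        have mk: "m \<in> {1..k}" using m nk by auto
        have "ipN N (gs_w N y m) (gs_w N y m) \<ge> 2 * ipN N (y m) (gs_w N y m) - ipN N (y m) (y m)"
          by (rule ip_sq_ge)
        moreover have "ipN N (y m) (gs_w N y m) \<ge> ipN N (y m) (y m) - \<delta>' * (2 * k) * N"
          using ab[OF m mk] by linarith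
        moreover have "ipN N (y m) (y m) \<ge> (1 - \<eta>) * N" using ip_diag_ge[OF g mk] .
        moreover have "\<delta>' * (2 * k) * N \<le> N / 8"
        proof -
          have "\<delta>' * (2 * k) * N = (2 * (real k * \<delta>')) * N" by (simp add: algebra_simps)
          also have "\<dots> \<le> (1/8) * N" using d'k Npos by (intro mult_right_mono) auto
          finally show ?thesis by simp
        qed
        moreover have "\<eta> * N \<le> N / 4" using eta1(2) Npos mult_right_mono[of \<eta> "1/4" "real N"] by simp
        moreover have "(1 - \<eta>) * N = N - \<eta> * N" by (simp add: algebra_simps)
        ultimately show ?thesis by linarith
      qed
      have cb: "\<bar>ipN N (y (Suc n)) (gs_w N y m) / ipN N (gs_w N y m) (gs_w N y m)\<bar> \<le> 2 * (\<eta> + 2 * real k * \<delta>')"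
        if m: "m \<in> {1..n}" for m
      proof -
        have mk: "m \<in> {1..k}" and sk: "Suc n \<in> {1..k}" using m nk by auto
        have "\<bar>ipN N (y (Suc n)) (gs_w N y m)\<bar> \<le> \<bar>ipN N (y (Suc n)) (y m)\<bar> + \<delta>' * (2 * k) * N"
          using ab[OF m sk] by linarith
        also have "\<dots> \<le> \<eta> * N + \<delta>' * (2 * k) * N"
          using ip_off[OF g sk mk] m by auto
        finally have num: "\<bar>ipN N (y (Suc n)) (gs_w N y m)\<bar> \<le> (\<eta> + 2 * real k * \<delta>') * N"
          by (simp add: algebra_simps)
        have W: "ipN N (gs_w N y m) (gs_w N y m) \<ge> N / 2" by (rule Wge[OF m])
        have Wp: "ipN N (gs_w N y m) (gs_w N y m) > 0" using W Npos by linarith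
        have "\<bar>ipN N (y (Suc n)) (gs_w N y m) / ipN N (gs_w N y m) (gs_w N y m)\<bar>
            = \<bar>ipN N (y (Suc n)) (gs_w N y m)\<bar> / ipN N (gs_w N y m) (gs_w N y m)"
          using Wp by (simp add: abs_divide)
        also have "\<dots> \<le> ((\<eta> + 2 * real k * \<delta>') * N) / (N / 2)"
        proof -
          have nn: "0 \<le> (\<eta> + 2 * real k * \<delta>') * real N" using etapos d'pos by simp
          show ?thesis by (rule frac_le[OF nn num]) (use W Npos in auto)
        qed
        also have "\<dots> = 2 * (\<eta> + 2 * real k * \<delta>')" using Npos by (simp add: field_simps)
        finally show ?thesis .
      qed
      have wb: "\<bar>gs_w N y m j\<bar> \<le> (\<Sum>r\<in>{1..n}. \<bar>y r j\<bar>)" if m: "m \<in> {1..n}" for m j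
        using m by (intro w_abs_bound[OF hw[OF m]]) (auto simp: less_imp_le d'pos d'le1)
      show "Hc (Suc n) \<delta> N y"
        unfolding Hc_def
      proof (intro ballI allI)
        fix m j assume m: "m \<in> {1..Suc n}"
        show "\<bar>gs_w N y m j - y m j\<bar> \<le> \<delta> * (\<Sum>r\<in>{1..<m}. \<bar>y r j\<bar>)"
        proof (cases "m \<le> n")
          case True
          then have m': "m \<in> {1..n}" using m by auto
          have "\<delta>' * (\<Sum>r\<in>{1..<m}. \<bar>y r j\<bar>) \<le> \<delta> * (\<Sum>r\<in>{1..<m}. \<bar>y r j\<bar>)"
            using d'1(1) by (intro mult_right_mono sum_nonneg) auto
          then show ?thesis using hw[OF m', of j] by linarith
        next
          case False
          then have mn: "m = Suc n" using m by auto
          define T where "T = (\<Sum>r\<in>{1..n}. \<bar>y r j\<bar>)"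
          have T0: "T \<ge> 0" unfolding T_def by (rule sum_nonneg) simp
          have "\<bar>gs_w N y (Suc n) j - y (Suc n) j\<bar> =
             \<bar>\<Sum>m=1..n. ipN N (y (Suc n)) (gs_w N y m) / ipN N (gs_w N y m) (gs_w N y m) * gs_w N y m j\<bar>"
            by (simp add: gs_w_rec)
          also have "\<dots> \<le> (\<Sum>m=1..n. \<bar>ipN N (y (Suc n)) (gs_w N y m) / ipN N (gs_w N y m) (gs_w N y m) * gs_w N y m j\<bar>)"
            by (rule sum_abs)
          also have "\<dots> \<le> (\<Sum>m=1..n. 2 * (\<eta> + 2 * real k * \<delta>') * T)"
          proof (rule sum_mono)
            fix m assume m: "m \<in> {1..n}"
            show "\<bar>ipN N (y (Suc n)) (gs_w N y m) / ipN N (gs_w N y m) (gs_w N y m) * gs_w N y m j\<bar>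
                \<le> 2 * (\<eta> + 2 * real k * \<delta>') * T"
              unfolding abs_mult T_def using cb[OF m] wb[OF m, of j]
              by (rule mult_mono) (use etapos d'pos in auto)
          qed
          also have "\<dots> = n * (2 * (\<eta> + 2 * real k * \<delta>')) * T" by simp
          also have "\<dots> \<le> \<delta> * T"
          proof (rule mult_right_mono[OF _ T0])
            have "real n * (2 * (\<eta> + 2 * real k * \<delta>')) \<le> real k * (2 * (\<eta> + 2 * real k * \<delta>'))"
              using nk etapos d'pos by (intro mult_right_mono) auto
            also have "\<dots> = 2 * (real k * \<eta>) + 4 * (real k * real k * \<delta>')" by (simp add: algebra_simps)
            also have "\<dots> \<le> \<delta>" using etak d'k2 by linarith
            finally show "real n * (2 * (\<eta> + 2 * real k * \<delta>')) \<le> \<delta>" .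
          qed
          finally have X: "\<bar>gs_w N y (Suc n) j - y (Suc n) j\<bar> \<le> \<delta> * T" .
          have "T = (\<Sum>r\<in>{1..<Suc n}. \<bar>y r j\<bar>)" unfolding T_def by (rule sum.cong) auto
          then show ?thesis using X mn by metis
        qed
      qed
    qed
  qed
qed



lemma sq_sum_le:
  fixes f :: "nat \<Rightarrow> real"
  assumes "finite R"
  shows "(\<Sum>r\<in>R. f r)^2 \<le> card R * (\<Sum>r\<in>R. (f r)^2)"
proof -
  have "(\<Sum>r\<in>R. f r)^2 = (\<Sum>r\<in>R. \<Sum>r'\<in>R. f r * f r')" by (simp add: power2_eq_square sum_product)
  also have "\<dots> \<le> (\<Sum>r\<in>R. \<Sum>r'\<in>R. ((f r)^2 + (f r')^2) / 2)"
  proof (intro sum_mono)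
    fix r r'
    have "0 \<le> (f r - f r')^2" by simp
    then show "f r * f r' \<le> ((f r)^2 + (f r')^2) / 2" by (simp add: power2_eq_square algebra_simps)
  qed
  also have "\<dots> = (\<Sum>r\<in>R. \<Sum>r'\<in>R. (f r)^2 / 2) + (\<Sum>r\<in>R. \<Sum>r'\<in>R. (f r')^2 / 2)"
    by (simp add: add_divide_distrib sum.distrib)
  also have "\<dots> = card R * (\<Sum>r\<in>R. (f r)^2)"
    by (simp add: sum_divide_distrib[symmetric] sum_distrib_left[symmetric] algebra_simps)
  finally show ?thesis .
qed

lemma Q_lemma:
  fixes a z y :: "nat \<Rightarrow> real" and k :: nat and \<theta> :: real
  assumes k1: "k \<ge> 1" and apos: "\<forall>i\<in>{1..k}. a i > 0"
    and zy: "\<forall>i\<in>{1..k}. \<bar>z i - y i\<bar> \<le> \<theta> * (\<Sum>r\<in>{1..k}. \<bar>y r\<bar>)"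
    and th: "0 \<le> \<theta>" "\<theta> \<le> 1"
  shows "\<bar>(\<Sum>i=1..k. a i * z i ^ 2) - (\<Sum>i=1..k. a i * y i ^ 2)\<bar>
     \<le> \<theta> * (3 * k * (\<Sum>i=1..k. a i) / Min (a ` {1..k})) * (\<Sum>i=1..k. a i * y i ^ 2)"
proof -
  define U where "U = (\<Sum>r\<in>{1..k}. \<bar>y r\<bar>)"
  define am where "am = Min (a ` {1..k})"
  define SA where "SA = (\<Sum>i=1..k. a i)"
  define Q where "Q = (\<Sum>i=1..k. a i * y i ^ 2)"
  have ne: "a ` {1..k} \<noteq> {}" using k1 by auto
  have am_pos: "am > 0" unfolding am_def using apos ne by (subst Min_gr_iff) auto
  have am_le: "am \<le> a i" if "i \<in> {1..k}" for i unfolding am_def using that by auto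
  have U0: "U \<ge> 0" unfolding U_def by (rule sum_nonneg) auto
  have yU: "\<bar>y i\<bar> \<le> U" if "i \<in> {1..k}" for i
    unfolding U_def using that by (intro member_le_sum) auto
  have U2: "U^2 \<le> k * (\<Sum>r\<in>{1..k}. (y r)^2)"
    using sq_sum_le[of "{1..k}" "\<lambda>r. \<bar>y r\<bar>"] by (simp add: U_def)
  have "am * (\<Sum>r\<in>{1..k}. (y r)^2) = (\<Sum>r\<in>{1..k}. am * (y r)^2)" by (simp add: sum_distrib_left)
  also have "\<dots> \<le> Q" unfolding Q_def by (intro sum_mono mult_right_mono am_le) auto
  finally have yQ: "(\<Sum>r\<in>{1..k}. (y r)^2) \<le> Q / am" using am_pos by (simp add: field_simps)
  have "\<bar>(\<Sum>i=1..k. a i * z i ^ 2) - Q\<bar> = \<bar>\<Sum>i=1..k. a i * (z i ^ 2 - y i ^ 2)\<bar>"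
    by (simp add: Q_def sum_subtractf right_diff_distrib)
  also have "\<dots> \<le> (\<Sum>i=1..k. \<bar>a i * (z i ^ 2 - y i ^ 2)\<bar>)" by (rule sum_abs)
  also have "\<dots> \<le> (\<Sum>i=1..k. a i * (3 * \<theta> * U^2))"
  proof (rule sum_mono)
    fix i assume i: "i \<in> {1..k}"
    have d: "\<bar>z i - y i\<bar> \<le> \<theta> * U" using zy i by (simp add: U_def)
    have "\<bar>z i + y i\<bar> \<le> \<bar>z i - y i\<bar> + 2 * \<bar>y i\<bar>" by linarith
    also have "\<dots> \<le> \<theta> * U + 2 * U" using d yU[OF i] by linarith
    also have "\<dots> \<le> 3 * U" using th U0 mult_left_le_one_le[of U \<theta>] by linarith
    finally have s: "\<bar>z i + y i\<bar> \<le> 3 * U" .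
    have "\<bar>z i ^ 2 - y i ^ 2\<bar> = \<bar>z i - y i\<bar> * \<bar>z i + y i\<bar>"
      by (simp add: power2_eq_square abs_mult[symmetric] algebra_simps)
    also have "\<dots> \<le> (\<theta> * U) * (3 * U)" using d s by (intro mult_mono) auto
    finally have "\<bar>z i ^ 2 - y i ^ 2\<bar> \<le> 3 * \<theta> * U^2" by (simp add: power2_eq_square algebra_simps)
    then show "\<bar>a i * (z i ^ 2 - y i ^ 2)\<bar> \<le> a i * (3 * \<theta> * U^2)"
      using apos i by (simp add: abs_mult mult_left_mono less_imp_le)
  qed
  also have "\<dots> = SA * (3 * \<theta> * U^2)" unfolding SA_def by (rule sum_distrib_right[symmetric])
  also have "\<dots> = 3 * \<theta> * SA * U^2" by (simp add: algebra_simps)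
  also have "\<dots> \<le> 3 * \<theta> * SA * (k * (Q / am))"
  proof (rule mult_left_mono)
    show "U^2 \<le> k * (Q / am)" using U2 yQ by (smt (verit) mult_left_mono of_nat_0_le_iff)
    have SA0: "SA \<ge> 0" unfolding SA_def using apos by (intro sum_nonneg) (auto simp: less_imp_le)
    show "0 \<le> 3 * \<theta> * SA" using th SA0 by simp
  qed
  also have "\<dots> = \<theta> * (3 * k * SA / am) * Q" using am_pos by (simp add: field_simps)
  finally show ?thesis unfolding Q_def SA_def am_def .
qed

lemma Min_lemma:
  fixes Q Q' :: "nat \<Rightarrow> real"
  assumes "finite S" "S \<noteq> {}" and Q0: "\<forall>j\<in>S. Q j \<ge> 0"
    and QQ: "\<forall>j\<in>S. \<bar>Q' j - Q j\<bar> \<le> lam * Q j" and l: "0 \<le> lam" "lam \<le> 1/2"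
  shows "\<bar>Min (Q' ` S) - Min (Q ` S)\<bar> \<le> 3 * lam * Min (Q ` S)"
proof -
  have "Min (Q ` S) \<in> Q ` S" using assms(1,2) by (intro Min_in) auto
  then obtain j0 where j0: "j0 \<in> S" "Q j0 = Min (Q ` S)" by force
  have "Min (Q' ` S) \<in> Q' ` S" using assms(1,2) by (intro Min_in) auto
  then obtain j1 where j1: "j1 \<in> S" "Q' j1 = Min (Q' ` S)" by force
  have m0: "Min (Q' ` S) \<le> Q' j0" using assms(1) j0(1) by auto
  have m1: "Min (Q ` S) \<le> Q j1" using assms(1) j1(1) by auto
  have a0: "Q' j0 \<le> (1 + lam) * Q j0" using QQ j0(1) by (auto simp: algebra_simps abs_le_iff)
  have a1: "Q' j1 \<ge> (1 - lam) * Q j1" using QQ j1(1) by (auto simp: algebra_simps abs_le_iff)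
  have Q1: "(1 - lam) * Q j1 \<le> (1 + lam) * Q j0" using a1 a0 m0 j1(2) by linarith
  have Qj0: "Q j0 \<ge> 0" using Q0 j0 by auto
  have "Q j1 \<le> 2 * (1 + lam) * Q j0"
  proof -
    have "Q j1 / 2 \<le> (1 - lam) * Q j1" using l Q0 j1(1) mult_right_mono[of "1/2" "1-lam" "Q j1"] by auto
    then show ?thesis using Q1 by linarith
  qed
  then have "lam * Q j1 \<le> lam * (2 * (1 + lam) * Q j0)" using l by (intro mult_left_mono) auto
  moreover have "lam * (2 * (1 + lam) * Q j0) \<le> 3 * lam * Q j0"
  proof -
    have "2 * (1 + lam) \<le> 3" using l by auto
    then have "2 * (1 + lam) * Q j0 \<le> 3 * Q j0" using Qj0 by (intro mult_right_mono) auto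
    then have X: "lam * (2 * (1 + lam) * Q j0) \<le> lam * (3 * Q j0)" by (rule mult_left_mono) (use l in auto)
    have "lam * (3 * Q j0) = 3 * lam * Q j0" by simp
    then show ?thesis using X by linarith
  qed
  moreover have "Min (Q ` S) - Min (Q' ` S) \<le> lam * Q j1" using m1 a1 j1(2) by (simp add: algebra_simps)
  moreover have "Min (Q' ` S) - Min (Q ` S) \<le> lam * Q j0" using m0 a0 j0(2) by (simp add: algebra_simps)
  moreover have "lam * Q j0 \<le> 3 * lam * Q j0" using l Qj0 by (simp add: mult_nonneg_nonneg)
  ultimately show ?thesis using j0(2) by (simp add: abs_le_iff)
qed



lemma NU:
  assumes g: "gcond k \<eta> N y" and e1: "\<eta> \<le> 1" and H: "Hc k \<delta> N y" and d: "0 \<le> \<delta>" "\<delta> \<le> 1"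
    and i: "i \<in> {1..k}"
  shows "\<bar>ipN N (gs_w N y i) (gs_w N y i) - N\<bar> \<le> (\<eta> + 4*real k*\<delta> + 2*(real k)^2*\<delta>^2) * N"
proof -
  define w where "w = gs_w N y i"
  have hw: "\<bar>w j - y i j\<bar> \<le> \<delta> * (\<Sum>r\<in>{1..<i}. \<bar>y r j\<bar>)" for j
    using H i unfolding Hc_def w_def by blast
  have iden: "ipN N w w = ipN N (y i) (y i) + 2 * (ipN N (y i) w - ipN N (y i) (y i)) + (\<Sum>j=1..N. (w j - y i j)^2)"
    by (simp add: ipN_def power2_eq_square algebra_simps sum.distrib sum_subtractf sum_distrib_left)
  have A: "\<bar>ipN N (y i) (y i) - N\<bar> \<le> \<eta> * N" using g i unfolding gcond_def by force
  have B: "\<bar>ipN N (y i) w - ipN N (y i) (y i)\<bar> \<le> \<delta> * (2 * k) * N"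
    using i by (intro ip_diff_bound[OF g e1 i i d(1)] hw)
  have C0: "0 \<le> (\<Sum>j=1..N. (w j - y i j)^2)" by (intro sum_nonneg) auto
  have "(\<Sum>j=1..N. (w j - y i j)^2) \<le> (\<Sum>j=1..N. (\<delta> * (\<Sum>r\<in>{1..<i}. \<bar>y r j\<bar>))^2)"
  proof (rule sum_mono)
    fix j
    have "(w j - y i j)^2 = \<bar>w j - y i j\<bar>^2" by simp
    also have "\<dots> \<le> (\<delta> * (\<Sum>r\<in>{1..<i}. \<bar>y r j\<bar>))^2" by (rule power_mono[OF hw]) simp
    finally show "(w j - y i j)^2 \<le> (\<delta> * (\<Sum>r\<in>{1..<i}. \<bar>y r j\<bar>))^2" .
  qed
  also have "\<dots> = \<delta>^2 * (\<Sum>r\<in>{1..<i}. \<Sum>r'\<in>{1..<i}. \<Sum>j=1..N. \<bar>y r j\<bar> * \<bar>y r' j\<bar>)"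
  proof -
    have "(\<Sum>j=1..N. (\<delta> * (\<Sum>r\<in>{1..<i}. \<bar>y r j\<bar>))^2)
        = (\<Sum>j=1..N. \<delta>^2 * (\<Sum>r\<in>{1..<i}. \<Sum>r'\<in>{1..<i}. \<bar>y r j\<bar> * \<bar>y r' j\<bar>))"
    proof (rule sum.cong[OF refl])
      fix j
      have "(\<Sum>r\<in>{1..<i}. \<bar>y r j\<bar>)^2 = (\<Sum>r\<in>{1..<i}. \<Sum>r'\<in>{1..<i}. \<bar>y r j\<bar> * \<bar>y r' j\<bar>)"
        by (simp add: power2_eq_square sum_product)
      then show "(\<delta> * (\<Sum>r\<in>{1..<i}. \<bar>y r j\<bar>))^2 = \<delta>^2 * (\<Sum>r\<in>{1..<i}. \<Sum>r'\<in>{1..<i}. \<bar>y r j\<bar> * \<bar>y r' j\<bar>)"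
        by (simp only: power_mult_distrib)
    qed
    also have "\<dots> = \<delta>^2 * (\<Sum>j=1..N. \<Sum>r\<in>{1..<i}. \<Sum>r'\<in>{1..<i}. \<bar>y r j\<bar> * \<bar>y r' j\<bar>)"
      by (simp add: sum_distrib_left)
    also have "(\<Sum>j=1..N. \<Sum>r\<in>{1..<i}. \<Sum>r'\<in>{1..<i}. \<bar>y r j\<bar> * \<bar>y r' j\<bar>)
        = (\<Sum>r\<in>{1..<i}. \<Sum>j=1..N. \<Sum>r'\<in>{1..<i}. \<bar>y r j\<bar> * \<bar>y r' j\<bar>)" by (rule sum.swap)
    also have "\<dots> = (\<Sum>r\<in>{1..<i}. \<Sum>r'\<in>{1..<i}. \<Sum>j=1..N. \<bar>y r j\<bar> * \<bar>y r' j\<bar>)"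
      by (rule sum.cong[OF refl]) (rule sum.swap)
    finally show ?thesis .
  qed
  also have "\<dots> \<le> \<delta>^2 * (\<Sum>r\<in>{1..<i}. \<Sum>r'\<in>{1..<i}. 2 * real N)"
  proof (rule mult_left_mono[OF sum_mono[OF sum_mono]])
    fix r r' assume "r \<in> {1..<i}" "r' \<in> {1..<i}"
    then show "(\<Sum>j=1..N. \<bar>y r j\<bar> * \<bar>y r' j\<bar>) \<le> 2 * real N"
      using i amgm[OF g e1, of r r'] by auto
  qed simp
  also have "\<dots> = \<delta>^2 * ((real (i - 1))^2 * (2 * N))" using i by (simp add: power2_eq_square of_nat_diff)
  also have "\<dots> \<le> \<delta>^2 * ((real k)^2 * (2 * N))"
    using i by (intro mult_left_mono mult_right_mono power_mono) auto
  finally have C: "(\<Sum>j=1..N. (w j - y i j)^2) \<le> \<delta>^2 * ((real k)^2 * (2 * N))" .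
  have "\<bar>ipN N w w - N\<bar> \<le> \<eta> * N + 2 * (\<delta> * (2 * k) * N) + \<delta>^2 * ((real k)^2 * (2 * N))"
    using iden A B C C0 by (simp add: abs_le_iff)
  also have "\<dots> = (\<eta> + 4*real k*\<delta> + 2*(real k)^2*\<delta>^2) * N" by (simp add: algebra_simps)
  finally show ?thesis unfolding w_def .
qed


lemma sqrt_dev: assumes "x \<ge> 0" shows "\<bar>sqrt x - 1\<bar> \<le> \<bar>x - 1\<bar>"
proof -
  have "x - 1 = (sqrt x - 1) * (sqrt x + 1)" using assms by (simp add: algebra_simps)
  then have "\<bar>x - 1\<bar> = \<bar>sqrt x - 1\<bar> * \<bar>sqrt x + 1\<bar>" by (simp add: abs_mult[symmetric])
  moreover have "\<bar>sqrt x + 1\<bar> = sqrt x + 1" using assms by simp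
  ultimately have "\<bar>x - 1\<bar> = \<bar>sqrt x - 1\<bar> * (sqrt x + 1)" by simp
  moreover have "\<bar>sqrt x - 1\<bar> \<le> \<bar>sqrt x - 1\<bar> * (sqrt x + 1)"
    using assms by (simp add: mult_le_cancel_left1)
  ultimately show ?thesis by simp
qed

lemma FIN:
  assumes k1: "k \<ge> 1"
  shows "\<forall>\<theta>>0. \<exists>\<eta>>0. \<forall>N y. N \<ge> 1 \<longrightarrow> gcond k \<eta> N y \<longrightarrow>
           (\<forall>i\<in>{1..k}. \<forall>j. \<bar>sqrt N * gs_gamma N y i j - y i j\<bar> \<le> \<theta> * (\<Sum>r\<in>{1..k}. \<bar>y r j\<bar>))"
proof (intro allI impI)
  fix \<theta> :: real assume "\<theta> > 0"
  define \<zeta> where "\<zeta> = min \<theta> 1"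
  have z: "\<zeta> > 0" "\<zeta> \<le> \<theta>" "\<zeta> \<le> 1" using \<open>\<theta>>0\<close> by (auto simp: \<zeta>_def)
  have K: "real k \<ge> 1" using k1 by simp
  define \<delta> where "\<delta> = \<zeta> / (48 * (real k)^2)"
  have dpos: "\<delta> > 0" using z K by (simp add: \<delta>_def)
  have dk2: "(real k)^2 * \<delta> = \<zeta> / 48" using K by (simp add: \<delta>_def)
  have kk: "real k \<le> (real k)^2" using K by (simp add: power2_eq_square)
  have "1 \<le> (real k)^2" using K by (simp add: one_le_power)
  from mult_right_mono[OF this less_imp_le[OF dpos]] have dd: "\<delta> \<le> (real k)^2 * \<delta>" by simp
  have d1: "\<delta> \<le> 1" using dd dk2 z by linarith
  obtain \<eta>1 where "\<eta>1 > 0" and H1: "\<forall>N y. N \<ge> 1 \<longrightarrow> gcond k \<eta>1 N y \<longrightarrow> Hc k \<delta> N y"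
    using DL[of k k] dpos by blast
  define \<eta> where "\<eta> = min \<eta>1 (\<zeta> / 8)"
  have epos: "\<eta> > 0" using \<open>\<eta>1 > 0\<close> z by (simp add: \<eta>_def)
  have e1: "\<eta> \<le> \<eta>1" "\<eta> \<le> \<zeta> / 8" by (simp_all add: \<eta>_def)
  define \<rho> where "\<rho> = \<eta> + 4*real k*\<delta> + 2*(real k)^2*\<delta>^2"
  have rho: "\<rho> \<le> \<zeta> / 4"
  proof -
    have "4*real k*\<delta> \<le> 4*((real k)^2*\<delta>)" using kk dpos by (simp add: mult_right_mono)
    moreover have "2*(real k)^2*\<delta>^2 \<le> 2*((real k)^2*\<delta>)"
    proof -
      have "\<delta>^2 \<le> \<delta>" using d1 dpos by (simp add: power2_eq_square mult_left_le)
      then show ?thesis by (simp add: mult_left_mono)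
    qed
    ultimately show ?thesis unfolding \<rho>_def using dk2 e1 by linarith
  qed
  have rho0: "\<rho> \<ge> 0" unfolding \<rho>_def using epos dpos by simp
  show "\<exists>\<eta>>0. \<forall>N y. N \<ge> 1 \<longrightarrow> gcond k \<eta> N y \<longrightarrow>
           (\<forall>i\<in>{1..k}. \<forall>j. \<bar>sqrt N * gs_gamma N y i j - y i j\<bar> \<le> \<theta> * (\<Sum>r\<in>{1..k}. \<bar>y r j\<bar>))"
  proof (intro exI[of _ \<eta>] conjI epos allI impI ballI)
    fix N :: nat and y i j assume N1: "N \<ge> 1" and g: "gcond k \<eta> N y" and i: "i \<in> {1..k}"
    have Npos: "real N > 0" using N1 by simp
    have H: "Hc k \<delta> N y" using H1 N1 gcond_mono[OF g e1(1)] by blast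
    have eta_le1: "\<eta> \<le> 1" using e1 z by linarith
    define w where "w = gs_w N y i"
    define W where "W = ipN N w w"
    define U where "U = (\<Sum>r\<in>{1..k}. \<bar>y r j\<bar>)"
    have U0: "U \<ge> 0" unfolding U_def by (rule sum_nonneg) auto
    have WN: "\<bar>W - N\<bar> \<le> \<rho> * N" unfolding W_def w_def \<rho>_def
      by (rule NU[OF g eta_le1 H less_imp_le[OF dpos] d1 i])
    have "\<rho> \<le> 1/4" using rho z by linarith
    from mult_right_mono[OF this, of "real N"] have rN: "\<rho> * N \<le> N / 4" by simp
    have Wge: "W \<ge> 3 * N / 4" using WN rN by (simp add: abs_le_iff)
    have Wpos: "W > 0" using Wge Npos by linarith
    have hw: "\<bar>w j - y i j\<bar> \<le> \<delta> * (\<Sum>r\<in>{1..<i}. \<bar>y r j\<bar>)"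
      using H i unfolding Hc_def w_def by blast
    have wU: "\<bar>w j\<bar> \<le> U" unfolding U_def
      using i by (intro w_abs_bound[OF hw]) (auto simp: less_imp_le dpos d1)
    have sub: "(\<Sum>r\<in>{1..<i}. \<bar>y r j\<bar>) \<le> U" unfolding U_def using i by (intro sum_mono2) auto
    have wy: "\<bar>w j - y i j\<bar> \<le> \<delta> * U" using hw mult_left_mono[OF sub less_imp_le[OF dpos]] by linarith
    define \<nu> where "\<nu> = sqrt N / sqrt W"
    have gam: "sqrt N * gs_gamma N y i j = \<nu> * w j"
      by (simp add: gs_gamma_def \<nu>_def w_def W_def)
    have nu: "\<bar>\<nu> - 1\<bar> \<le> 2 * \<rho>"
    proof -
      have "\<nu> = sqrt (N / W)" by (simp add: \<nu>_def real_sqrt_divide)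
      then have "\<bar>\<nu> - 1\<bar> \<le> \<bar>N / W - 1\<bar>" using Wpos by (simp add: sqrt_dev)
      also have "\<bar>N / W - 1\<bar> = \<bar>N - W\<bar> / W" using Wpos by (simp add: field_simps abs_divide)
      also have "\<dots> \<le> (\<rho> * N) / (3 * N / 4)"
        using WN Wge Npos rho0 by (intro frac_le) (auto simp: abs_minus_commute)
      also have "\<dots> = (4/3) * \<rho>" using Npos by (simp add: field_simps)
      also have "\<dots> \<le> 2 * \<rho>" using rho0 by simp
      finally show ?thesis .
    qed
    have "\<bar>\<nu> * w j - y i j\<bar> \<le> \<bar>\<nu> - 1\<bar> * \<bar>w j\<bar> + \<bar>w j - y i j\<bar>"
    proof -
      have "\<nu> * w j - y i j = (\<nu> - 1) * w j + (w j - y i j)" by (simp add: algebra_simps)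
      then show ?thesis by (metis abs_mult abs_triangle_ineq)
    qed
    also have "\<dots> \<le> 2 * \<rho> * U + \<delta> * U"
      using mult_mono[OF nu wU] rho0 wy by simp
    also have "\<dots> = (2 * \<rho> + \<delta>) * U" by (simp add: algebra_simps)
    also have "\<dots> \<le> \<theta> * U"
    proof (rule mult_right_mono[OF _ U0])
      have "\<delta> \<le> \<zeta> / 48" using dk2 dd by linarith
      then show "2 * \<rho> + \<delta> \<le> \<theta>" using rho z by linarith
    qed
    finally show "\<bar>sqrt N * gs_gamma N y i j - y i j\<bar> \<le> \<theta> * (\<Sum>r\<in>{1..k}. \<bar>y r j\<bar>)"
      unfolding gam U_def .
  qed
qed



lemma STAT:
  fixes k :: nat and a :: "nat \<Rightarrow> real"
  assumes k1: "k \<ge> 1" and apos: "\<forall>i\<in>{1..k}. a i > 0" and "\<epsilon> > 0" and "C > 0"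
  shows "\<exists>\<eta>>0. \<forall>N y. N \<ge> 1 \<longrightarrow> gcond k \<eta> N (yvecs y) \<longrightarrow>
     real N powr (2 / real k) * Min ((\<lambda>j. \<Sum>i=1..k. a i * (yvecs y i j)^2) ` {1..N}) \<le> C \<longrightarrow>
     \<bar>lemma3p10_stat k a N y\<bar> \<le> \<epsilon>"
proof -
  define L where "L = 3 * k * (\<Sum>i=1..k. a i) / Min (a ` {1..k})"
  have ne: "a ` {1..k} \<noteq> {}" using k1 by auto
  have am_pos: "Min (a ` {1..k}) > 0" using apos ne by (subst Min_gr_iff) auto
  have SA: "(\<Sum>i=1..k. a i) > 0" using apos k1 by (intro sum_pos) auto
  have Lpos: "L > 0" unfolding L_def using am_pos SA k1 by simp
  define \<theta> where "\<theta> = min 1 (min (1 / (2 * L)) (\<epsilon> / (3 * L * C)))"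
  have tpos: "\<theta> > 0" using Lpos \<open>\<epsilon>>0\<close> \<open>C>0\<close> by (simp add: \<theta>_def)
  have t1: "\<theta> \<le> 1" "\<theta> \<le> 1 / (2 * L)" "\<theta> \<le> \<epsilon> / (3 * L * C)" by (simp_all add: \<theta>_def)
  have tL: "\<theta> * L \<le> 1/2" using t1(2) Lpos by (simp add: field_simps)
  have tLC: "3 * (\<theta> * L) * C \<le> \<epsilon>" using t1(3) Lpos \<open>C>0\<close> by (simp add: field_simps)
  obtain \<eta> where "\<eta> > 0" and H: "\<forall>N y. N \<ge> 1 \<longrightarrow> gcond k \<eta> N y \<longrightarrow>
           (\<forall>i\<in>{1..k}. \<forall>j. \<bar>sqrt N * gs_gamma N y i j - y i j\<bar> \<le> \<theta> * (\<Sum>r\<in>{1..k}. \<bar>y r j\<bar>))"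
    using FIN[OF k1] tpos by blast
  show ?thesis
  proof (intro exI[of _ \<eta>] conjI \<open>\<eta> > 0\<close> allI impI)
    fix N y assume N1: "N \<ge> 1" and g: "gcond k \<eta> N (yvecs y)"
      and MC: "real N powr (2 / real k) * Min ((\<lambda>j. \<Sum>i=1..k. a i * (yvecs y i j)^2) ` {1..N}) \<le> C"
    define Q where "Q j = (\<Sum>i=1..k. a i * (yvecs y i j)^2)" for j
    define Q' where "Q' j = (\<Sum>i=1..k. a i * (sqrt (real N) * gs_gamma N (yvecs y) i j)^2)" for j
    have QQ: "\<forall>j\<in>{1..N}. \<bar>Q' j - Q j\<bar> \<le> (\<theta> * L) * Q j"
    proof
      fix j assume "j \<in> {1..N}"
      have zy: "\<forall>i\<in>{1..k}. \<bar>sqrt N * gs_gamma N (yvecs y) i j - yvecs y i j\<bar> \<le> \<theta> * (\<Sum>r\<in>{1..k}. \<bar>yvecs y r j\<bar>)"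
        using H N1 g by blast
      show "\<bar>Q' j - Q j\<bar> \<le> (\<theta> * L) * Q j"
        using Q_lemma[OF k1 apos zy less_imp_le[OF tpos] t1(1)]
        unfolding Q_def Q'_def L_def by (simp add: mult.assoc)
    qed
    have Q0: "\<forall>j\<in>{1..N}. Q j \<ge> 0"
    proof
      fix j assume "j \<in> {1..N}"
      show "Q j \<ge> 0" unfolding Q_def
      proof (rule sum_nonneg)
        fix i assume "i \<in> {1..k}"
        then have "a i > 0" using apos by blast
        then show "0 \<le> a i * (yvecs y i j)^2" by simp
      qed
    qed
    have Mle: "\<bar>Min (Q' ` {1..N}) - Min (Q ` {1..N})\<bar> \<le> 3 * (\<theta> * L) * Min (Q ` {1..N})"
      by (rule Min_lemma) (use N1 QQ Q0 tL tpos Lpos in auto)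
    have P: "real N powr (2 / real k) \<ge> 0" by simp
    have "\<bar>lemma3p10_stat k a N y\<bar> = real N powr (2 / real k) * \<bar>Min (Q' ` {1..N}) - Min (Q ` {1..N})\<bar>"
      unfolding lemma3p10_stat_def Q_def Q'_def by (simp add: abs_mult)
    also have "\<dots> \<le> real N powr (2 / real k) * (3 * (\<theta> * L) * Min (Q ` {1..N}))"
      by (rule mult_left_mono[OF Mle P])
    also have "\<dots> = 3 * (\<theta> * L) * (real N powr (2 / real k) * Min (Q ` {1..N}))" by simp
    also have "\<dots> \<le> 3 * (\<theta> * L) * C"
      using MC tpos Lpos unfolding Q_def by (intro mult_left_mono) auto
    also have "\<dots> \<le> \<epsilon>" by (rule tLC)
    finally show "\<bar>lemma3p10_stat k a N y\<bar> \<le> \<epsilon>" .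
  qed
qed



lemma G_one: "has_bochner_integral G (\<lambda>_. 1::real) 1"
proof -
  interpret prob_space G by (rule G_prob)
  show ?thesis using prob_space by (simp add: has_bochner_integral_iff)
qed

lemma G_h: "has_bochner_integral G (\<lambda>t. t^2 - 1) 0"
  using has_bochner_integral_diff[OF G_x2 G_one] by simp

lemma G_h2: "has_bochner_integral G (\<lambda>t. (t^2 - 1)^2) 2"
proof -
  have e: "(\<lambda>t::real. (t^2 - 1)^2) = (\<lambda>t. (t^4 - 2 * t^2) + 1)"
    by (rule ext) (simp add: power2_eq_square power4_eq_xxxx algebra_simps)
  have "has_bochner_integral G (\<lambda>t. (t^4 - 2 * t^2) + 1) ((3 - 2 * 1) + 1)"
    by (intro has_bochner_integral_add has_bochner_integral_diff has_bochner_integral_mult_right G_x4 G_x2 G_one)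
  then show ?thesis unfolding e by simp
qed

lemma gp:
  fixes h :: "real \<Rightarrow> real" and I :: "(nat\<times>nat) set"
  assumes "finite I" "J \<subseteq> I" "has_bochner_integral G h v"
  shows "has_bochner_integral (PiM I (\<lambda>_. G)) (\<lambda>\<omega>. \<Prod>c\<in>J. h (\<omega> c)) (v ^ card J)"
proof -
  have ih: "integrable G h" and iv: "integral\<^sup>L G h = v" using assms(3) by (auto simp: has_bochner_integral_iff)
  show ?thesis
    using gen_prod[of I J "\<lambda>_. h", OF assms(1,2)] ih iv by (simp add: has_bochner_integral_iff)
qed

lemma MM_prob: "prob_space (PiM I (\<lambda>_::nat\<times>nat. G))"
  by (intro prob_space_PiM G_prob)

lemma hbi_eq: "has_bochner_integral M f v \<Longrightarrow> (\<And>x. f x = g x) \<Longrightarrow> has_bochner_integral M g v"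
  by (metis ext)

lemma P1_neq:
  assumes i: "i \<in> {1..N}" and l: "l \<in> {1..N}" and il: "i \<noteq> l" and "\<eta> > 0" and "N \<ge> 1"
  defines "S \<equiv> {\<omega>\<in>space (gauss_space N). \<bar>\<Sum>j\<in>{1..N}. \<omega> (i,j) * \<omega> (l,j)\<bar> \<ge> \<eta> * N}"
  shows "measure (gauss_space N) S \<le> 1 / (\<eta>^2 * N)" "S \<in> sets (gauss_space N)"
proof -
  define I where "I = {1..N} \<times> {1..N}"
  have gs: "gauss_space N = PiM I (\<lambda>_. G)" by (simp add: gauss_space_def I_def)
  interpret P: prob_space "PiM I (\<lambda>_. G)" by (rule MM_prob)
  have fI: "finite I" by (simp add: I_def)
  define Z where "Z j \<omega> = \<omega> (i,j) * \<omega> (l,j)" for j and \<omega> :: "nat\<times>nat \<Rightarrow> real"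
  have ZZ: "has_bochner_integral (PiM I (\<lambda>_. G)) (\<lambda>\<omega>. Z j \<omega> * Z j' \<omega>) (if j = j' then 1 else 0)"
    if j: "j \<in> {1..N}" "j' \<in> {1..N}" for j j'
  proof (cases "j = j'")
    case True
    have sub: "{(i,j),(l,j)} \<subseteq> I" using i l j by (auto simp: I_def)
    have "has_bochner_integral (PiM I (\<lambda>_. G)) (\<lambda>\<omega>. \<Prod>c\<in>{(i,j),(l,j)}. (\<omega> c)^2) (1 ^ card {(i,j),(l,j)})"
      by (rule gp[OF fI sub G_x2])
    then show ?thesis using True il by (simp add: Z_def power2_eq_square algebra_simps)
  next
    case False
    have sub: "{(i,j),(l,j),(i,j'),(l,j')} \<subseteq> I" using i l j by (auto simp: I_def)
    have "has_bochner_integral (PiM I (\<lambda>_. G)) (\<lambda>\<omega>. \<Prod>c\<in>{(i,j),(l,j),(i,j'),(l,j')}. \<omega> c) (0 ^ card {(i,j),(l,j),(i,j'),(l,j')})"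
      by (rule gp[OF fI sub G_x])
    then show ?thesis using False il by (simp add: Z_def algebra_simps)
  qed
  have Zi: "has_bochner_integral (PiM I (\<lambda>_. G)) (\<lambda>\<omega>. Z j \<omega>) 0" if j: "j \<in> {1..N}" for j
  proof -
    have sub: "{(i,j),(l,j)} \<subseteq> I" using i l j by (auto simp: I_def)
    have "has_bochner_integral (PiM I (\<lambda>_. G)) (\<lambda>\<omega>. \<Prod>c\<in>{(i,j),(l,j)}. \<omega> c) (0 ^ card {(i,j),(l,j)})"
      by (rule gp[OF fI sub G_x])
    then show ?thesis using il by (simp add: Z_def algebra_simps)
  qed
  have fin: "finite {1..N}" by simp
  have int: "integrable (PiM I (\<lambda>_. G)) (\<lambda>\<omega>. Z j \<omega> * Z j' \<omega>)" if "j \<in> {1..N}" "j' \<in> {1..N}" for j j'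
    using ZZ[OF that] by (simp add: has_bochner_integral_iff)
  have meas: "Z j \<in> borel_measurable (PiM I (\<lambda>_. G))" if "j \<in> {1..N}" for j
    using Zi[OF that] by (simp add: has_bochner_integral_iff borel_measurable_integrable)
  have orth: "P.expectation (\<lambda>\<omega>. Z j \<omega> * Z j' \<omega>) = 0" if "j \<in> {1..N}" "j' \<in> {1..N}" "j \<noteq> j'" for j j'
    using ZZ[OF that(1,2)] that(3) by (simp add: has_bochner_integral_iff)
  have var: "P.expectation (\<lambda>\<omega>. Z j \<omega> * Z j \<omega>) \<le> 1" if "j \<in> {1..N}" for j
    using ZZ[OF that that] by (simp add: has_bochner_integral_iff)
  have tpos: "\<eta> * N > 0" using \<open>\<eta> > 0\<close> \<open>N \<ge> 1\<close> by simp
  note C = P.cheb_sum[where J="{1..N}" and Z=Z and t="\<eta> * N", OF fin int meas orth var tpos]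
  have ar: "real (card {1..N}) * 1 / (\<eta> * N)\<^sup>2 = 1 / (\<eta>^2 * N)" using \<open>N \<ge> 1\<close> \<open>\<eta> > 0\<close>
    by (simp add: power2_eq_square field_simps)
  have Seq: "S = {\<omega>\<in>space (PiM I (\<lambda>_. G)). \<bar>\<Sum>j\<in>{1..N}. Z j \<omega>\<bar> \<ge> \<eta> * N}"
    unfolding S_def gs Z_def by (rule refl)
  show "S \<in> sets (gauss_space N)" unfolding Seq gs by (rule C(2))
  show "measure (gauss_space N) S \<le> 1 / (\<eta>^2 * N)" unfolding Seq gs using C(1) unfolding ar .
qed

lemma P1_eq:
  assumes i: "i \<in> {1..N}" and "\<eta> > 0" and "N \<ge> 1"
  defines "S \<equiv> {\<omega>\<in>space (gauss_space N). \<bar>(\<Sum>j\<in>{1..N}. \<omega> (i,j) * \<omega> (i,j)) - N\<bar> \<ge> \<eta> * N}"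
  shows "measure (gauss_space N) S \<le> 2 / (\<eta>^2 * N)" "S \<in> sets (gauss_space N)"
proof -
  define I where "I = {1..N} \<times> {1..N}"
  have gs: "gauss_space N = PiM I (\<lambda>_. G)" by (simp add: gauss_space_def I_def)
  interpret P: prob_space "PiM I (\<lambda>_. G)" by (rule MM_prob)
  have fI: "finite I" by (simp add: I_def)
  define Z where "Z j \<omega> = (\<omega> (i,j))^2 - 1" for j and \<omega> :: "nat\<times>nat \<Rightarrow> real"
  have ZZ: "has_bochner_integral (PiM I (\<lambda>_. G)) (\<lambda>\<omega>. Z j \<omega> * Z j' \<omega>) (if j = j' then 2 else 0)"
    if j: "j \<in> {1..N}" "j' \<in> {1..N}" for j j'
  proof (cases "j = j'")
    case True
    have sub: "{(i,j)} \<subseteq> I" using i j by (auto simp: I_def)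
    have "has_bochner_integral (PiM I (\<lambda>_. G)) (\<lambda>\<omega>. \<Prod>c\<in>{(i,j)}. ((\<omega> c)^2 - 1)^2) (2 ^ card {(i,j)})"
      by (rule gp[OF fI sub G_h2])
    then show ?thesis using True by (simp add: Z_def power2_eq_square)
  next
    case False
    have sub: "{(i,j),(i,j')} \<subseteq> I" using i j by (auto simp: I_def)
    have "has_bochner_integral (PiM I (\<lambda>_. G)) (\<lambda>\<omega>. \<Prod>c\<in>{(i,j),(i,j')}. (\<omega> c)^2 - 1) (0 ^ card {(i,j),(i,j')})"
      by (rule gp[OF fI sub G_h])
    then show ?thesis using False by (simp add: Z_def)
  qed
  have Zi: "has_bochner_integral (PiM I (\<lambda>_. G)) (\<lambda>\<omega>. Z j \<omega>) 0" if j: "j \<in> {1..N}" for j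
  proof -
    have sub: "{(i,j)} \<subseteq> I" using i j by (auto simp: I_def)
    have "has_bochner_integral (PiM I (\<lambda>_. G)) (\<lambda>\<omega>. \<Prod>c\<in>{(i,j)}. (\<omega> c)^2 - 1) (0 ^ card {(i,j)})"
      by (rule gp[OF fI sub G_h])
    then show ?thesis by (simp add: Z_def)
  qed
  have fin: "finite {1..N}" by simp
  have int: "integrable (PiM I (\<lambda>_. G)) (\<lambda>\<omega>. Z j \<omega> * Z j' \<omega>)" if "j \<in> {1..N}" "j' \<in> {1..N}" for j j'
    using ZZ[OF that] by (simp add: has_bochner_integral_iff)
  have meas: "Z j \<in> borel_measurable (PiM I (\<lambda>_. G))" if "j \<in> {1..N}" for j
    using Zi[OF that] by (simp add: has_bochner_integral_iff borel_measurable_integrable)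
  have orth: "P.expectation (\<lambda>\<omega>. Z j \<omega> * Z j' \<omega>) = 0" if "j \<in> {1..N}" "j' \<in> {1..N}" "j \<noteq> j'" for j j'
    using ZZ[OF that(1,2)] that(3) by (simp add: has_bochner_integral_iff)
  have var: "P.expectation (\<lambda>\<omega>. Z j \<omega> * Z j \<omega>) \<le> 2" if "j \<in> {1..N}" for j
    using ZZ[OF that that] by (simp add: has_bochner_integral_iff)
  have tpos: "\<eta> * N > 0" using \<open>\<eta> > 0\<close> \<open>N \<ge> 1\<close> by simp
  note C = P.cheb_sum[where J="{1..N}" and Z=Z and t="\<eta> * N", OF fin int meas orth var tpos]
  have ar: "real (card {1..N}) * 2 / (\<eta> * N)\<^sup>2 = 2 / (\<eta>^2 * N)" using \<open>N \<ge> 1\<close> \<open>\<eta> > 0\<close>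
    by (simp add: power2_eq_square field_simps)
  have se: "(\<Sum>j\<in>{1..N}. Z j \<omega>) = (\<Sum>j\<in>{1..N}. \<omega> (i,j) * \<omega> (i,j)) - N" for \<omega>
    by (simp add: Z_def sum_subtractf power2_eq_square)
  have Seq: "S = {\<omega>\<in>space (PiM I (\<lambda>_. G)). \<bar>\<Sum>j\<in>{1..N}. Z j \<omega>\<bar> \<ge> \<eta> * N}"
    unfolding S_def gs se by (rule refl)
  show "S \<in> sets (gauss_space N)" unfolding Seq gs by (rule C(2))
  show "measure (gauss_space N) S \<le> 2 / (\<eta>^2 * N)" unfolding Seq gs using C(1) unfolding ar .
qed


lemma P1:
  assumes i: "i \<in> {1..N}" and l: "l \<in> {1..N}" and "\<eta> > 0" and "N \<ge> 1"
  defines "S \<equiv> {\<omega>\<in>space (gauss_space N).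
     \<bar>ipN N (yvecs \<omega> i) (yvecs \<omega> l) - (if i = l then real N else 0)\<bar> \<ge> \<eta> * N}"
  shows "measure (gauss_space N) S \<le> 2 / (\<eta>^2 * N)" "S \<in> sets (gauss_space N)"
proof -
  have "measure (gauss_space N) S \<le> 2 / (\<eta>^2 * N) \<and> S \<in> sets (gauss_space N)"
  proof (cases "i = l")
    case True
    have e: "S = {\<omega>\<in>space (gauss_space N). \<bar>(\<Sum>j\<in>{1..N}. \<omega> (i,j) * \<omega> (i,j)) - N\<bar> \<ge> \<eta> * N}"
      unfolding S_def using True by (simp add: ipN_def yvecs_def)
    show ?thesis unfolding e using P1_eq[OF i \<open>\<eta> > 0\<close> \<open>N \<ge> 1\<close>] by simp
  next
    case False
    have e: "S = {\<omega>\<in>space (gauss_space N). \<bar>\<Sum>j\<in>{1..N}. \<omega> (i,j) * \<omega> (l,j)\<bar> \<ge> \<eta> * N}"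
      unfolding S_def using False by (simp add: ipN_def yvecs_def)
    have "1 / (\<eta>^2 * N) \<le> 2 / (\<eta>^2 * N)" using \<open>\<eta> > 0\<close> \<open>N \<ge> 1\<close> by (simp add: divide_right_mono)
    then show ?thesis unfolding e using P1_neq[OF i l False \<open>\<eta> > 0\<close> \<open>N \<ge> 1\<close>] by simp
  qed
  then show "measure (gauss_space N) S \<le> 2 / (\<eta>^2 * N)" "S \<in> sets (gauss_space N)" by auto
qed



lemma q_bound:
  assumes "0 < s" "s \<le> 1"
  shows "has_bochner_integral G (indicator {-s..s} :: real \<Rightarrow> real) (measure G {-s..s})"
    and "measure G {-s..s} \<ge> 2 * s * std_normal_density 1"
proof -
  interpret prob_space G by (rule G_prob)
  show "has_bochner_integral G (indicator {-s..s} :: real \<Rightarrow> real) (measure G {-s..s})"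
  proof -
    have "integrable G (indicator {-s..s} :: real \<Rightarrow> real)"
      by (rule integrable_real_indicator) (auto simp: less_top[symmetric])
    then show ?thesis by (simp add: has_bochner_integral_iff)
  qed
  have "measure G {-s..s} = integral\<^sup>L G (indicator {-s..s} :: real \<Rightarrow> real)" by simp
  also have "\<dots> = integral\<^sup>L lborel (\<lambda>x. std_normal_density x *\<^sub>R (indicator {-s..s} x :: real))"
    by (rule integral_density) auto
  also have "\<dots> \<ge> integral\<^sup>L lborel (\<lambda>x. std_normal_density 1 * (indicator {-s..s} x :: real))"
  proof (rule integral_mono)
    show "integrable lborel (\<lambda>x. std_normal_density 1 * (indicator {-s..s} x :: real))"
      using assms by (intro integrable_mult_right integrable_real_indicator) (auto simp: emeasure_lborel_Icc)
    have "integrable lborel (\<lambda>x. indicator {-s..s} x *\<^sub>R std_normal_density x)"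
      by (intro integrable_mult_indicator) (use integrable_std_normal_moment[of 0] in auto)
    then show "integrable lborel (\<lambda>x. std_normal_density x *\<^sub>R (indicator {-s..s} x :: real))"
      by (simp add: mult.commute)
    fix x :: real
    show "std_normal_density 1 * indicator {-s..s} x \<le> std_normal_density x *\<^sub>R (indicator {-s..s} x :: real)"
    proof (cases "x \<in> {-s..s}")
      case True
      then have ax: "\<bar>x\<bar> \<le> 1" using assms by auto
      have "\<bar>x\<bar>^2 \<le> 1" by (rule power_le_one) (use ax in auto)
      then have "x^2 \<le> 1" by simp
      then have "exp (- 1 / 2) \<le> exp (- (x^2) / 2)" by simp
      then have "exp (- (1 / 2)) / sqrt (2 * pi) \<le> exp (- (x^2 / 2)) / sqrt (2 * pi)"
        by (intro divide_right_mono) auto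
      then show ?thesis using True by (simp add: std_normal_density_def)
    qed simp
  qed
  also have "integral\<^sup>L lborel (\<lambda>x. std_normal_density 1 * (indicator {-s..s} x :: real)) = std_normal_density 1 * (2 * s)"
    using assms by simp
  finally show "measure G {-s..s} \<ge> 2 * s * std_normal_density 1" by (simp add: mult.commute)
qed


lemma ind_sq: "(indicator A x :: real) * indicator A x = indicator A x"
  by (simp add: indicator_def)

lemma prod_pair: "(\<Prod>c\<in>{1..k}\<times>J. f c) = (\<Prod>i\<in>{1..k}. \<Prod>j\<in>J. f (i,j))"
  by (simp add: prod.cartesian_product)

lemma P2:
  assumes k1: "k \<ge> 1" and kN: "k \<le> N" and s: "0 < s" "s \<le> 1"
  defines "q \<equiv> measure G {-s..s}"
  defines "E \<equiv> {\<omega>\<in>space (gauss_space N).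
     \<bar>\<Sum>j\<in>{1..N}. (\<Prod>i\<in>{1..k}. indicator {-s..s} (\<omega> (i,j)) :: real) - q^k\<bar> \<ge> N * q^k}"
  shows "measure (gauss_space N) E \<le> 1 / (N * q^k)" "E \<in> sets (gauss_space N)"
proof -
  define I where "I = {1..N} \<times> {1..N}"
  have gs: "gauss_space N = PiM I (\<lambda>_. G)" by (simp add: gauss_space_def I_def)
  interpret P: prob_space "PiM I (\<lambda>_. G)" by (rule MM_prob)
  have fI: "finite I" by (simp add: I_def)
  have N1: "N \<ge> 1" using k1 kN by simp
  have hq: "has_bochner_integral G (indicator {-s..s} :: real \<Rightarrow> real) q"
    unfolding q_def by (rule q_bound(1)[OF s])
  have "q \<ge> 2 * s * std_normal_density 1" unfolding q_def by (rule q_bound(2)[OF s])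
  moreover have "std_normal_density 1 > 0" by (simp add: normal_density_pos)
  ultimately have qpos: "q > 0" using s by (smt (verit) mult_pos_pos)
  define p where "p = q^k"
  have ppos: "p > 0" unfolding p_def using qpos by simp
  define Y where "Y j \<omega> = (\<Prod>i\<in>{1..k}. indicator {-s..s} (\<omega> (i,j)) :: real)" for j and \<omega> :: "nat\<times>nat \<Rightarrow> real"
  define Z where "Z j \<omega> = Y j \<omega> - p" for j \<omega>
  have hY: "has_bochner_integral (PiM I (\<lambda>_. G)) (\<lambda>\<omega>. Y j \<omega>) p" if j: "j \<in> {1..N}" for j
  proof -
    have sub: "{1..k} \<times> {j} \<subseteq> I" using j kN by (auto simp: I_def)
    have "has_bochner_integral (PiM I (\<lambda>_. G)) (\<lambda>\<omega>. \<Prod>c\<in>{1..k} \<times> {j}. indicator {-s..s} (\<omega> c)) (q ^ card ({1..k} \<times> {j}))"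
      by (rule gp[OF fI sub hq])
    moreover have eqf: "(\<Prod>c\<in>{1..k} \<times> {j}. indicator {-s..s} (\<omega> c)) = Y j \<omega>" for \<omega> :: "nat\<times>nat \<Rightarrow> real"
      unfolding prod_pair Y_def by simp
    ultimately show ?thesis unfolding eqf by (simp add: p_def card_cartesian_product)
  qed
  have hYY: "has_bochner_integral (PiM I (\<lambda>_. G)) (\<lambda>\<omega>. Y j \<omega> * Y j' \<omega>) (p * p)"
    if j: "j \<in> {1..N}" "j' \<in> {1..N}" "j \<noteq> j'" for j j'
  proof -
    have sub: "{1..k} \<times> {j, j'} \<subseteq> I" using j kN by (auto simp: I_def)
    have "has_bochner_integral (PiM I (\<lambda>_. G)) (\<lambda>\<omega>. \<Prod>c\<in>{1..k} \<times> {j, j'}. indicator {-s..s} (\<omega> c)) (q ^ card ({1..k} \<times> {j, j'}))"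
      by (rule gp[OF fI sub hq])
    moreover have "card ({1..k} \<times> {j, j'}) = k + k" using j(3) by (simp add: card_cartesian_product)
    moreover have "(\<Prod>c\<in>{1..k} \<times> {j, j'}. indicator {-s..s} (\<omega> c)) = Y j \<omega> * Y j' \<omega>" for \<omega> :: "nat\<times>nat \<Rightarrow> real"
      unfolding prod_pair Y_def using j(3) by (simp add: prod.distrib)
    ultimately show ?thesis by (simp add: p_def power_add)
  qed
  have YY: "Y j \<omega> * Y j \<omega> = Y j \<omega>" for j \<omega>
    by (simp add: Y_def prod.distrib[symmetric] ind_sq)
  have ZZ: "has_bochner_integral (PiM I (\<lambda>_. G)) (\<lambda>\<omega>. Z j \<omega> * Z j' \<omega>) (if j = j' then p - p * p else 0)"
    if j: "j \<in> {1..N}" "j' \<in> {1..N}" for j j'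
  proof (cases "j = j'")
    case True
    have e: "Z j \<omega> * Z j' \<omega> = (1 - 2 * p) * Y j \<omega> + p * p" for \<omega>
      using True YY[of j \<omega>] by (simp add: Z_def algebra_simps)
    have "has_bochner_integral (PiM I (\<lambda>_. G)) (\<lambda>\<omega>. (1 - 2 * p) * Y j \<omega> + p * p) ((1 - 2 * p) * p + p * p)"
      by (intro has_bochner_integral_add has_bochner_integral_mult_right hY[OF j(1)])
         (simp add: has_bochner_integral_iff P.prob_space)
    then show ?thesis unfolding e using True by (simp add: algebra_simps)
  next
    case False
    have e: "Z j \<omega> * Z j' \<omega> = Y j \<omega> * Y j' \<omega> - p * Y j \<omega> - p * Y j' \<omega> + p * p" for \<omega>
      by (simp add: Z_def algebra_simps)
    have "has_bochner_integral (PiM I (\<lambda>_. G)) (\<lambda>\<omega>. Y j \<omega> * Y j' \<omega> - p * Y j \<omega> - p * Y j' \<omega> + p * p) (p * p - p * p - p * p + p * p)"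
      by (intro has_bochner_integral_add has_bochner_integral_diff has_bochner_integral_mult_right
            hYY[OF j False] hY[OF j(1)] hY[OF j(2)])
         (simp add: has_bochner_integral_iff P.prob_space)
    then show ?thesis unfolding e using False by simp
  qed
  have fin: "finite {1..N}" by simp
  have int: "integrable (PiM I (\<lambda>_. G)) (\<lambda>\<omega>. Z j \<omega> * Z j' \<omega>)" if "j \<in> {1..N}" "j' \<in> {1..N}" for j j'
    using ZZ[OF that] by (simp add: has_bochner_integral_iff)
  have meas: "Z j \<in> borel_measurable (PiM I (\<lambda>_. G))" if "j \<in> {1..N}" for j
  proof -
    have "integrable (PiM I (\<lambda>_. G)) (\<lambda>\<omega>. Y j \<omega>)" using hY[OF that] by (simp add: has_bochner_integral_iff)
    then have "(\<lambda>\<omega>. Y j \<omega>) \<in> borel_measurable (PiM I (\<lambda>_. G))" by (rule borel_measurable_integrable)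
    then show ?thesis unfolding Z_def[abs_def] by measurable
  qed
  have orth: "P.expectation (\<lambda>\<omega>. Z j \<omega> * Z j' \<omega>) = 0" if "j \<in> {1..N}" "j' \<in> {1..N}" "j \<noteq> j'" for j j'
    using ZZ[OF that(1,2)] that(3) by (simp add: has_bochner_integral_iff)
  have var: "P.expectation (\<lambda>\<omega>. Z j \<omega> * Z j \<omega>) \<le> p" if "j \<in> {1..N}" for j
    using ZZ[OF that that] by (simp add: has_bochner_integral_iff)
  have tpos: "N * p > 0" using ppos N1 by simp
  note C = P.cheb_sum[where J="{1..N}" and Z=Z and t="N * p", OF fin int meas orth var tpos]
  have ar: "real (card {1..N}) * p / (N * p)\<^sup>2 = 1 / (N * q^k)" using N1 ppos
    by (simp add: power2_eq_square field_simps p_def)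
  have Seq: "E = {\<omega>\<in>space (PiM I (\<lambda>_. G)). \<bar>\<Sum>j\<in>{1..N}. Z j \<omega>\<bar> \<ge> N * p}"
    unfolding E_def gs Z_def Y_def p_def by (rule refl)
  show "E \<in> sets (gauss_space N)" unfolding Seq gs by (rule C(2))
  show "measure (gauss_space N) E \<le> 1 / (N * q^k)" unfolding Seq gs using C(1) unfolding ar .
qed



lemma powr_facts:
  assumes N1: "N \<ge> (1::nat)" and k1: "k \<ge> (1::nat)" and tau: "\<tau> > 0" and Nt: "real N \<ge> \<tau>^k"
  defines "s \<equiv> \<tau> / real N powr (1 / real k)"
  shows "s > 0" "s \<le> 1" "s^k = \<tau>^k / N" "real N powr (2 / real k) * s^2 = \<tau>^2"
proof -
  have Np: "real N > 0" using N1 by simp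
  have P: "real N powr (1 / real k) > 0" using Np by simp
  show "s > 0" unfolding s_def using P tau by simp
  have "(real N powr (1 / real k))^k = real N powr (real k * (1 / real k))"
    using Np by (simp add: powr_power)
  also have "\<dots> = real N" using k1 Np by simp
  finally have Pk: "(real N powr (1 / real k))^k = real N" .
  show "s^k = \<tau>^k / N" unfolding s_def by (simp add: power_divide Pk)
  have "(real N powr (1 / real k))^2 = real N powr (2 * (1 / real k))"
    using Np by (simp add: powr_power)
  then have P2: "(real N powr (1 / real k))^2 = real N powr (2 / real k)" by simp
  show "real N powr (2 / real k) * s^2 = \<tau>^2" unfolding s_def using P
    by (simp add: power_divide P2[symmetric])
  have "\<tau> = (\<tau>^k) powr (1 / real k)"
  proof -
    have "(\<tau>^k) powr (1 / real k) = (\<tau> powr real k) powr (1 / real k)" using tau by (simp add: powr_realpow)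
    also have "\<dots> = \<tau> powr (real k * (1 / real k))" by (simp add: powr_powr)
    also have "\<dots> = \<tau>" using k1 tau by simp
    finally show ?thesis by simp
  qed
  also have "\<dots> \<le> real N powr (1 / real k)" using Nt tau by (intro powr_mono2) auto
  finally show "s \<le> 1" unfolding s_def using P by simp
qed


theorem lemma3p10:
  fixes k :: nat and a :: "nat \<Rightarrow> real"
  assumes "k \<ge> 1"
    and "\<forall>i\<in>{1..k}. a i > 0"
  shows "\<forall>\<epsilon>>0. (\<lambda>N. measure (gauss_space N)
            {\<omega> \<in> space (gauss_space N). \<bar>lemma3p10_stat k a N \<omega>\<bar> > \<epsilon>}) \<longlonglongrightarrow> 0"
proof (intro allI impI)
  fix \<epsilon> :: real assume "\<epsilon> > 0"
  note k1 = assms(1) and apos = assms(2)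
  show "(\<lambda>N. measure (gauss_space N)
            {\<omega> \<in> space (gauss_space N). \<bar>lemma3p10_stat k a N \<omega>\<bar> > \<epsilon>}) \<longlonglongrightarrow> 0"
    unfolding LIMSEQ_iff
  proof (intro allI impI)
    fix e :: real assume "e > 0"
    define c1 where "c1 = std_normal_density 1"
    have c1pos: "c1 > 0" unfolding c1_def by (simp add: normal_density_pos)
    define \<tau> where "\<tau> = (2 / e + 1) / c1"
    have tpos: "\<tau> > 0" unfolding \<tau>_def using c1pos \<open>e>0\<close> by (intro divide_pos_pos add_pos_pos) auto
    have t2: "2 * \<tau> * c1 = 2 * (2 / e + 1)" unfolding \<tau>_def using c1pos by simp
    define SA where "SA = (\<Sum>i=1..k. a i)"
    have SA0: "SA \<ge> 0" unfolding SA_def using apos by (intro sum_nonneg) (auto simp: less_imp_le)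
    define C where "C = SA * \<tau>^2 + 1"
    have Cpos: "C > 0" unfolding C_def using SA0 by (intro add_nonneg_pos mult_nonneg_nonneg) auto
    obtain \<eta> where "\<eta> > 0" and ST: "\<forall>N y. N \<ge> 1 \<longrightarrow> gcond k \<eta> N (yvecs y) \<longrightarrow>
     real N powr (2 / real k) * Min ((\<lambda>j. \<Sum>i=1..k. a i * (yvecs y i j)^2) ` {1..N}) \<le> C \<longrightarrow>
     \<bar>lemma3p10_stat k a N y\<bar> \<le> \<epsilon>"
      using STAT[OF k1 apos \<open>\<epsilon>>0\<close> Cpos] by blast
    define N0 where "N0 = nat \<lceil>max (real k) (max (\<tau>^k) (16 * (real k)^2 / (\<eta>^2 * e)))\<rceil> + 1"
    show "\<exists>no. \<forall>N\<ge>no. norm (measure (gauss_space N)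
            {\<omega> \<in> space (gauss_space N). \<bar>lemma3p10_stat k a N \<omega>\<bar> > \<epsilon>} - 0) < e"
    proof (intro exI[of _ N0] allI impI)
      fix N assume NN0: "N \<ge> N0"
      have NR: "real N > max (real k) (max (\<tau>^k) (16 * (real k)^2 / (\<eta>^2 * e)))"
        using NN0 unfolding N0_def by linarith
      have kN: "k \<le> N" using NR by simp
      have N1: "N \<ge> 1" using kN k1 by simp
      have Np: "real N > 0" using N1 by simp
      have Nt: "real N \<ge> \<tau>^k" using NR by simp
      have Ne: "real N > 16 * (real k)^2 / (\<eta>^2 * e)" using NR by simp
      define s where "s = \<tau> / real N powr (1 / real k)"
      have sf: "s > 0" "s \<le> 1" "s^k = \<tau>^k / N" "real N powr (2 / real k) * s^2 = \<tau>^2"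
        using powr_facts[OF N1 k1 tpos Nt] unfolding s_def by auto
      define q where "q = measure G {-s..s}"
      have qge: "q \<ge> 2 * s * c1" unfolding q_def c1_def by (rule q_bound(2)[OF sf(1,2)])
      have "2 * s * c1 > 0" using sf(1) c1pos by simp
      then have q0: "q > 0" using qge by linarith
      define E where "E = {\<omega>\<in>space (gauss_space N).
         \<bar>\<Sum>j\<in>{1..N}. (\<Prod>i\<in>{1..k}. indicator {-s..s} (\<omega> (i,j)) :: real) - q^k\<bar> \<ge> N * q^k}"
      have E: "measure (gauss_space N) E \<le> 1 / (N * q^k)" "E \<in> sets (gauss_space N)"
        unfolding E_def q_def by (rule P2[OF k1 kN sf(1,2)])+
      define S where "S il = {\<omega>\<in>space (gauss_space N).
         \<bar>ipN N (yvecs \<omega> (fst il)) (yvecs \<omega> (snd il)) - (if fst il = snd il then real N else 0)\<bar> \<ge> \<eta> * N}" for il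
      have Sm: "measure (gauss_space N) (S il) \<le> 2 / (\<eta>^2 * N)" "S il \<in> sets (gauss_space N)"
        if "il \<in> {1..k} \<times> {1..k}" for il
      proof -
        have "fst il \<in> {1..N}" "snd il \<in> {1..N}" using that kN by auto
        then show "measure (gauss_space N) (S il) \<le> 2 / (\<eta>^2 * N)" "S il \<in> sets (gauss_space N)"
          unfolding S_def by (rule P1[OF _ _ \<open>\<eta>>0\<close> N1])+
      qed
      interpret P: prob_space "gauss_space N" unfolding gauss_space_def by (rule MM_prob)
      define U where "U = (\<Union>il\<in>{1..k} \<times> {1..k}. S il)"
      have Us: "U \<in> sets (gauss_space N)" unfolding U_def using Sm(2) by auto
      have Um: "measure (gauss_space N) U \<le> (\<Sum>il\<in>{1..k} \<times> {1..k}. measure (gauss_space N) (S il))"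
        unfolding U_def by (rule P.finite_measure_subadditive_finite) (use Sm(2) in auto)
      also have "\<dots> \<le> (\<Sum>il\<in>{1..k} \<times> {1..k}. 2 / (\<eta>^2 * N))" by (intro sum_mono Sm(1))
      also have "\<dots> = (real k)^2 * (2 / (\<eta>^2 * N))" by (simp add: card_cartesian_product power2_eq_square)
      finally have Um2: "measure (gauss_space N) U \<le> (real k)^2 * (2 / (\<eta>^2 * N))" .
      have b1: "(real k)^2 * (2 / (\<eta>^2 * N)) < e / 8"
      proof -
        have "16 * (real k)^2 < real N * (\<eta>^2 * e)" using Ne \<open>\<eta>>0\<close> \<open>e>0\<close> by (simp add: field_simps)
        then show ?thesis using Np \<open>\<eta>>0\<close> \<open>e>0\<close> by (simp add: field_simps)
      qed
      have b2: "1 / (N * q^k) < e / 4"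
      proof -
        have "q^k \<ge> (2 * s * c1)^k" using qge sf(1) c1pos by (intro power_mono) auto
        also have "(2 * s * c1)^k = (2 * c1)^k * s^k" by (simp add: power_mult_distrib algebra_simps)
        finally have "real N * q^k \<ge> real N * ((2 * c1)^k * (\<tau>^k / N))" using sf(3) Np
          by (intro mult_left_mono) auto
        also have "real N * ((2 * c1)^k * (\<tau>^k / N)) = (2 * \<tau> * c1)^k" using Np
          by (simp add: power_mult_distrib algebra_simps)
        finally have X: "real N * q^k \<ge> (2 * \<tau> * c1)^k" .
        have g1: "2 * \<tau> * c1 \<ge> 1" using t2 \<open>e>0\<close> by simp
        have "(2 * \<tau> * c1)^1 \<le> (2 * \<tau> * c1)^k" by (rule power_increasing[OF k1 g1])
        then have "real N * q^k \<ge> 2 * (2 / e + 1)" using X t2 by simp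
        moreover have "2 * (2 / e + 1) > 4 / e" using \<open>e>0\<close> by simp
        ultimately have "real N * q^k > 4 / e" by linarith
        moreover have fe: "4 / e > 0" using \<open>e>0\<close> by simp
        ultimately have pq: "real N * q^k > 0" by linarith
        have "1 / (N * q^k) < 1 / (4 / e)"
          by (rule divide_strict_left_mono) (use \<open>real N * q^k > 4 / e\<close> fe pq in \<open>auto intro: mult_pos_pos\<close>)
        then show ?thesis by simp
      qed
      define T where "T = {\<omega> \<in> space (gauss_space N). \<bar>lemma3p10_stat k a N \<omega>\<bar> > \<epsilon>}"
      have sub: "T \<subseteq> U \<union> E"
      proof
        fix \<omega> assume "\<omega> \<in> T"
        then have om: "\<omega> \<in> space (gauss_space N)" and big: "\<bar>lemma3p10_stat k a N \<omega>\<bar> > \<epsilon>"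
          unfolding T_def by auto
        show "\<omega> \<in> U \<union> E"
        proof (rule ccontr)
          assume "\<omega> \<notin> U \<union> E"
          then have nU: "\<omega> \<notin> U" and nE: "\<omega> \<notin> E" by auto
          have g: "gcond k \<eta> N (yvecs \<omega>)" unfolding gcond_def
          proof (intro ballI)
            fix i l assume "i \<in> {1..k}" "l \<in> {1..k}"
            then have "\<omega> \<notin> S (i,l)" using nU unfolding U_def by auto
            then show "\<bar>ipN N (yvecs \<omega> i) (yvecs \<omega> l) - (if i = l then real N else 0)\<bar> \<le> \<eta> * N"
              using om unfolding S_def by auto
          qed
          have "\<exists>j\<in>{1..N}. (\<Prod>i\<in>{1..k}. indicator {-s..s} (\<omega> (i,j)) :: real) \<noteq> 0"
          proof (rule ccontr)
            assume "\<not> ?thesis"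
            then have "(\<Sum>j\<in>{1..N}. (\<Prod>i\<in>{1..k}. indicator {-s..s} (\<omega> (i,j)) :: real) - q^k) = (\<Sum>j\<in>{1..N}. - (q^k))"
              by (intro sum.cong) auto
            then have "\<bar>\<Sum>j\<in>{1..N}. (\<Prod>i\<in>{1..k}. indicator {-s..s} (\<omega> (i,j)) :: real) - q^k\<bar> = N * q^k"
              using q0 by simp
            then show False using nE om unfolding E_def by auto
          qed
          then obtain j where j: "j \<in> {1..N}" and pj: "(\<Prod>i\<in>{1..k}. indicator {-s..s} (\<omega> (i,j)) :: real) \<noteq> 0"
            by blast
          have inr: "\<bar>\<omega> (i,j)\<bar> \<le> s" if "i \<in> {1..k}" for i
          proof -
            have "indicator {-s..s} (\<omega> (i,j)) \<noteq> (0::real)" using pj that by (auto simp: prod_zero_iff)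
            then show ?thesis by (auto simp: indicator_def abs_le_iff)
          qed
          have Qj: "(\<Sum>i=1..k. a i * (yvecs \<omega> i j)^2) \<le> SA * s^2"
          proof -
            have "(\<Sum>i=1..k. a i * (yvecs \<omega> i j)^2) \<le> (\<Sum>i=1..k. a i * s^2)"
            proof (rule sum_mono)
              fix i assume i: "i \<in> {1..k}"
              have "(yvecs \<omega> i j)^2 \<le> s^2"
                using inr[OF i] by (simp add: yvecs_def abs_le_square_iff[symmetric] less_imp_le[OF sf(1)])
              moreover have "a i > 0" using apos i by blast
              ultimately show "a i * (yvecs \<omega> i j)^2 \<le> a i * s^2" by (intro mult_left_mono) auto
            qed
            then show ?thesis by (simp add: SA_def sum_distrib_right)
          qed
          have "Min ((\<lambda>j. \<Sum>i=1..k. a i * (yvecs \<omega> i j)^2) ` {1..N}) \<le> (\<Sum>i=1..k. a i * (yvecs \<omega> i j)^2)"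
            using j by (intro Min_le) auto
          also have "\<dots> \<le> SA * s^2" by (rule Qj)
          finally have "real N powr (2 / real k) * Min ((\<lambda>j. \<Sum>i=1..k. a i * (yvecs \<omega> i j)^2) ` {1..N})
              \<le> real N powr (2 / real k) * (SA * s^2)" by (intro mult_left_mono) auto
          also have "\<dots> = SA * \<tau>^2" using sf(4) by (simp add: algebra_simps)
          also have "\<dots> \<le> C" unfolding C_def by simp
          finally have "\<bar>lemma3p10_stat k a N \<omega>\<bar> \<le> \<epsilon>" using ST N1 g by blast
          then show False using big by simp
        qed
      qed
      have "measure (gauss_space N) T \<le> measure (gauss_space N) (U \<union> E)"
        by (rule P.finite_measure_mono[OF sub]) (use Us E(2) in auto)
      also have "\<dots> \<le> measure (gauss_space N) U + measure (gauss_space N) E"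
        by (rule measure_Un_le[OF Us E(2)])
      also have "\<dots> < e" using Um2 b1 E(1) b2 \<open>e>0\<close> by linarith
      finally have "measure (gauss_space N) T < e" .
      then show "norm (measure (gauss_space N)
            {\<omega> \<in> space (gauss_space N). \<bar>lemma3p10_stat k a N \<omega>\<bar> > \<epsilon>} - 0) < e"
        unfolding T_def by simp
    qed
  qed
qed


end
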